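(* Let $0<s<1/2$ and $\beta:=2s-\tfrac32$. There is $C=C(s)$ such that for every $T>0$, every $\omega\in C([0,T];\ell^2_s(\mathbb Z))$ and every $t\in[0,T]$, $$\|\mathcal N[\omega](t)\|_{\ell^2_\beta}\le C\|\omega(t)\|_{\ell^2_s}^3 .$$
   Context: $\langle n\rangle=(1+n^2)^{1/2}$; $\ell^2_s(\mathbb Z)$ is the space of $\omega:\mathbb Z\to\mathbb C$ with $\|\omega\|_{\ell^2_s}:=\|\langle\cdot\rangle^s\omega\|_{\ell^2}<\infty$. For $\omega$ set $\omega^*(n):=\overline{\omega(-n)}$. Write $n_{ij\ldots}=n_i+n_j+\cdots$, $\hat n:=n-i\mathbf 1_{\{n=0\}}$. For integers with $n=n_{123}$ define $m_1:=2i\frac{n n_{23}}{\hat n_1\hat n_2}\mathbf 1_{\{n>0\}}\mathbf 1_{\{n_{23}<0\}}\mathbf 1_{\{n_3\neq0\}}$, $m_2:=2i\frac{n n_{23}}{\hat n_1\hat n_2}\mathbf 1_{\{n<0\}}\mathbf 1_{\{n_{23}>0\}}\mathbf 1_{\{n_3\neq0\}}$, $m_3:=2i\frac{n}{\hat n_1}\mathbf 1_{\{n<0\}}\mathbf 1_{\{n_2n_3\neq0\}}$ (all functions of $(n,n_1,n_2,n_3)$), $\tilde m_1:=m_1\mathbf 1_{\{n_{12}n_{13}\neq0\}}$, and $\Phi:=n|n|-n_1|n_1|-n_2|n_2|-n_3|n_3|$. For $\omega:[0,T]\to\ell^2_s$ and $t\in[0,T]$, $n\in\mathbb Z$, $$\mathcal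 N[\omega](t,n):=\sum_{n=n_{123}}e^{it\Phi}\big[\tilde m_1\,\omega(t,n_1)\omega(t,n_2)\omega^*(t,n_3)+m_2\,\omega(t,n_1)\omega^*(t,n_2)\omega(t,n_3)+m_3\,\omega^*(t,n_1)\omega(t,n_2)\omega(t,n_3)\big],$$ the sum being over $(n_1,n_2,n_3)\in\mathbb Z^3$ with $n_1+n_2+n_3=n$. *)

theory Defs
  imports "HOL-Analysis.Analysis"
begin

definition jbr :: "int \<Rightarrow> real" where
  "jbr n = sqrt (1 + (real_of_int n)^2)"

definition in_l2s :: "real \<Rightarrow> (int \<Rightarrow> complex) \<Rightarrow> bool" where
  "in_l2s s w \<longleftrightarrow> (\<lambda>n. (jbr n powr s * cmod (w n))^2) summable_on UNIV"

definition l2s_norm :: "real \<Rightarrow> (int \<Rightarrow> complex) \<Rightarrow> real" where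
  "l2s_norm s w = sqrt (\<Sum>\<^sub>\<infinity>n. (jbr n powr s * cmod (w n))^2)"

definition star :: "(int \<Rightarrow> complex) \<Rightarrow> int \<Rightarrow> complex" where
  "star w n = cnj (w (-n))"

definition hatn :: "int \<Rightarrow> complex" where
  "hatn n = of_int n - (if n = 0 then \<i> else 0)"

definition m1 :: "int \<Rightarrow> int \<Rightarrow> int \<Rightarrow> int \<Rightarrow> complex" where
  "m1 n n1 n2 n3 = (if n > 0 \<and> n2 + n3 < 0 \<and> n3 \<noteq> 0
     then 2 * \<i> * of_int n * of_int (n2 + n3) / (hatn n1 * hatn n2) else 0)"

definition m2 :: "int \<Rightarrow> int \<Rightarrow> int \<Rightarrow> int \<Rightarrow> complex" where
  "m2 n n1 n2 n3 = (if n < 0 \<and> n2 + n3 > 0 \<and> n3 \<noteq> 0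
     then 2 * \<i> * of_int n * of_int (n2 + n3) / (hatn n1 * hatn n2) else 0)"

definition m3 :: "int \<Rightarrow> int \<Rightarrow> int \<Rightarrow> int \<Rightarrow> complex" where
  "m3 n n1 n2 n3 = (if n < 0 \<and> n2 * n3 \<noteq> 0
     then 2 * \<i> * of_int n / hatn n1 else 0)"

definition m1t :: "int \<Rightarrow> int \<Rightarrow> int \<Rightarrow> int \<Rightarrow> complex" where
  "m1t n n1 n2 n3 = (if (n1 + n2) * (n1 + n3) \<noteq> 0 then m1 n n1 n2 n3 else 0)"

definition Phi :: "int \<Rightarrow> int \<Rightarrow> int \<Rightarrow> int \<Rightarrow> int" where
  "Phi n n1 n2 n3 = n * \<bar>n\<bar> - n1 * \<bar>n1\<bar> - n2 * \<bar>n2\<bar> - n3 * \<bar>n3\<bar>"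

definition NN :: "(real \<Rightarrow> int \<Rightarrow> complex) \<Rightarrow> real \<Rightarrow> int \<Rightarrow> complex" where
  "NN w t n = (\<Sum>\<^sub>\<infinity>(n1, n2, n3) \<in> {(n1, n2, n3). n1 + n2 + n3 = n}.
      exp (\<i> * of_real t * of_int (Phi n n1 n2 n3)) *
      (m1t n n1 n2 n3 * w t n1 * w t n2 * star (w t) n3
       + m2 n n1 n2 n3 * w t n1 * star (w t) n2 * w t n3
       + m3 n n1 n2 n3 * star (w t) n1 * w t n2 * w t n3))"

end

theory Submission
  imports Defs
begin

lemma bridge_real:
  fixes f :: "'a \<Rightarrow> real"
  assumes nn: "\<And>x. f x \<ge> 0" and fin: "(\<integral>\<^sup>+x. ennreal (f x) \<partial>count_space UNIV) < \<infinity>"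
  shows "f summable_on UNIV" "infsum f UNIV = enn2real (\<integral>\<^sup>+x. ennreal (f x) \<partial>count_space UNIV)"
proof -
  have e: "(\<lambda>x. ennreal (norm (f x))) = (\<lambda>x. ennreal (f x))" using nn by (simp add: abs_of_nonneg)
  have "integrable (count_space UNIV) f"
    unfolding integrable_iff_bounded e using fin by simp
  hence i: "Infinite_Set_Sum.abs_summable_on f UNIV" by (simp add: Infinite_Set_Sum.abs_summable_on_def)
  hence "Infinite_Sum.abs_summable_on f UNIV" using abs_summable_equivalent by blast
  thus s: "f summable_on UNIV" using nn by (simp add: abs_of_nonneg)
  have "infsum f UNIV = infsetsum f UNIV" using infsetsum_infsum[OF i] by simp
  also have "\<dots> = enn2real (\<integral>\<^sup>+x. ennreal (f x) \<partial>count_space UNIV)"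
    by (rule infsetsum_conv_nn_integral) (use fin nn in auto)
  finally show "infsum f UNIV = enn2real (\<integral>\<^sup>+x. ennreal (f x) \<partial>count_space UNIV)" .
qed

lemma bridge_real2:
  fixes f :: "'a \<Rightarrow> real"
  assumes nn: "\<And>x. f x \<ge> 0" and s: "f summable_on UNIV"
  shows "(\<integral>\<^sup>+x. ennreal (f x) \<partial>count_space UNIV) = ennreal (infsum f UNIV)"
proof -
  have "Infinite_Sum.abs_summable_on f UNIV" using nn s by (simp add: abs_of_nonneg)
  hence i: "Infinite_Set_Sum.abs_summable_on f UNIV" using abs_summable_equivalent by blast
  have "(\<integral>\<^sup>+x. ennreal (f x) \<partial>count_space UNIV) = ennreal (infsetsum f UNIV)"
    by (rule nn_integral_conv_infsetsum) (use nn i in auto)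
  also have "\<dots> = ennreal (infsum f UNIV)" using infsetsum_infsum[OF i] by simp
  finally show ?thesis .
qed

lemma bridge_complex:
  fixes g :: "'a \<Rightarrow> complex"
  assumes fin: "(\<integral>\<^sup>+x. ennreal (norm (g x)) \<partial>count_space A) < \<infinity>"
  shows "norm (infsum g A) \<le> enn2real (\<integral>\<^sup>+x. ennreal (norm (g x)) \<partial>count_space A)"
proof -
  have "integrable (count_space A) g"
    unfolding integrable_iff_bounded using fin by simp
  hence i: "Infinite_Set_Sum.abs_summable_on g A" by (simp add: Infinite_Set_Sum.abs_summable_on_def)
  hence a: "Infinite_Sum.abs_summable_on g A" using abs_summable_equivalent by blast
  have "norm (infsum g A) \<le> infsum (\<lambda>x. norm (g x)) A" by (rule norm_infsum_bound[OF a])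
  also have "\<dots> = infsetsum (\<lambda>x. norm (g x)) A"
    using i by (subst infsetsum_infsum) auto
  also have "\<dots> = enn2real (\<integral>\<^sup>+x. ennreal (norm (g x)) \<partial>count_space A)"
    by (rule infsetsum_conv_nn_integral) (use fin in auto)
  finally show ?thesis .
qed

abbreviation SI :: "(int \<Rightarrow> ennreal) \<Rightarrow> ennreal" where
  "SI f \<equiv> \<integral>\<^sup>+x. f x \<partial>count_space UNIV"

lemma SI_shift: "SI (\<lambda>n. f (n - p)) = SI f"
proof -
  have "bij_betw (\<lambda>n. n - p) (UNIV::int set) UNIV"
    by (rule bij_betwI[of _ _ _ "\<lambda>n. n + p"]) auto
  from nn_integral_bij_count_space[OF this, of f] show ?thesis .
qed

lemma SI_shift2: "SI (\<lambda>p. f (n - p)) = SI f"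
proof -
  have "bij_betw (\<lambda>p. n - p) (UNIV::int set) UNIV"
    by (rule bij_betwI[of _ _ _ "\<lambda>p. n - p"]) auto
  from nn_integral_bij_count_space[OF this, of f] show ?thesis .
qed

lemma SI_neg: "SI (\<lambda>n. f (- n)) = SI f"
  using SI_shift2[of f 0] by simp

lemma SI_swap: "SI (\<lambda>x. SI (\<lambda>y. f x y)) = SI (\<lambda>y. SI (\<lambda>x. f x y))"
  by (rule nn_integral_count_space_nn_integral) auto

lemma SI_pair: "SI (\<lambda>x. SI (\<lambda>y. f (x, y))) = (\<integral>\<^sup>+z. f z \<partial>count_space UNIV)"
  by (rule nn_integral_fst_count_space)

lemma SI_mono: "(\<And>n. f n \<le> g n) \<Longrightarrow> SI f \<le> SI g"
  by (rule nn_integral_mono) auto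

lemma SI_add: "SI (\<lambda>n. f n + g n) = SI f + SI g"
  by (rule nn_integral_add) auto

lemma SI_cmult: "SI (\<lambda>n. c * f n) = c * SI f"
  by (rule nn_integral_cmult) auto

lemma SI_finite:
  assumes "finite A" "\<And>x. x \<notin> A \<Longrightarrow> f x = 0"
  shows "SI f = (\<Sum>x\<in>A. f x)"
  using assms by (intro nn_integral_count_space') auto

lemma SI_trunc:
  assumes "\<And>N::nat. (\<Sum>n\<in>{- int N..int N}. h n) \<le> B"
  shows "SI h \<le> B"
proof -
  define f where "f i n = (if n \<in> {- int i..int i} then h n else 0)" for i :: nat and n
  have inc: "incseq f"
    unfolding incseq_def le_fun_def f_def by auto
  have sup: "(SUP i. f i n) = h n" for n
  proof (rule antisym)
    show "(SUP i. f i n) \<le> h n" by (rule SUP_least) (auto simp: f_def)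
    have "f (nat \<bar>n\<bar>) n = h n" by (auto simp: f_def)
    thus "h n \<le> (SUP i. f i n)" by (metis SUP_upper UNIV_I)
  qed
  have "SI h = SI (\<lambda>n. SUP i. f i n)" by (simp add: sup)
  also have "\<dots> = (SUP i. SI (f i))"
    by (rule nn_integral_monotone_convergence_SUP[OF inc]) auto
  also have "\<dots> \<le> B"
  proof (rule SUP_least)
    fix i
    have "SI (f i) = (\<Sum>n\<in>{- int i..int i}. f i n)"
      by (rule SI_finite) (auto simp: f_def)
    also have "\<dots> = (\<Sum>n\<in>{- int i..int i}. h n)"
      by (rule sum.cong) (auto simp: f_def)
    finally show "SI (f i) \<le> B" using assms by simp
  qed
  finally show ?thesis .
qed

lemma CS_pair:
  fixes f g :: "int \<Rightarrow> int \<Rightarrow> ennreal"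
  shows "(SI (\<lambda>x. SI (\<lambda>y. f x y * g x y)))\<^sup>2 \<le> SI (\<lambda>x. SI (\<lambda>y. (f x y)\<^sup>2)) * SI (\<lambda>x. SI (\<lambda>y. (g x y)\<^sup>2))"
proof -
  have "(\<integral>\<^sup>+z. (\<lambda>(x,y). f x y) z * (\<lambda>(x,y). g x y) z \<partial>count_space UNIV)\<^sup>2 \<le>
        (\<integral>\<^sup>+z. ((\<lambda>(x,y). f x y) z)\<^sup>2 \<partial>count_space UNIV) * (\<integral>\<^sup>+z. ((\<lambda>(x,y). g x y) z)\<^sup>2 \<partial>count_space UNIV)"
    by (rule Cauchy_Schwarz_nn_integral) auto
  thus ?thesis
    using SI_pair[of "\<lambda>(x,y). f x y * g x y"] SI_pair[of "\<lambda>(x,y). (f x y)\<^sup>2"] SI_pair[of "\<lambda>(x,y). (g x y)\<^sup>2"]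
    by (simp add: split_beta)
qed

lemma CS_single:
  fixes f g :: "int \<Rightarrow> ennreal"
  shows "(SI (\<lambda>x. f x * g x))\<^sup>2 \<le> SI (\<lambda>x. (f x)\<^sup>2) * SI (\<lambda>x. (g x)\<^sup>2)"
  by (rule Cauchy_Schwarz_nn_integral) auto

lemma jbr_ge1: "jbr n \<ge> 1"
  unfolding jbr_def by simp

lemma jbr_pos: "jbr n > 0"
  using jbr_ge1[of n] by linarith

lemma jbr_sq: "(jbr n)\<^sup>2 = 1 + (real_of_int n)\<^sup>2"
  unfolding jbr_def by (simp add: add_nonneg_nonneg)

lemma jbr_minus[simp]: "jbr (- n) = jbr n"
  unfolding jbr_def by simp

lemma jbr_abs[simp]: "jbr \<bar>n\<bar> = jbr n"
  unfolding jbr_def by simp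

lemma jbr_ge_abs: "real_of_int \<bar>n\<bar> \<le> jbr n"
  unfolding jbr_def by (rule real_le_rsqrt) simp

lemma jbr_mono: "\<bar>m\<bar> \<le> \<bar>n\<bar> \<Longrightarrow> jbr m \<le> jbr n"
proof -
  assume h: "\<bar>m\<bar> \<le> \<bar>n\<bar>"
  have "\<bar>real_of_int m\<bar> \<le> \<bar>real_of_int n\<bar>" using h by linarith
  hence "(real_of_int m)\<^sup>2 \<le> (real_of_int n)\<^sup>2" by (simp only: abs_le_square_iff)
  thus ?thesis unfolding jbr_def by simp
qed

lemma jbr_add: "jbr (a + b) \<le> 2 * jbr a * jbr b"
proof -
  define x where "x = real_of_int a"
  define y where "y = real_of_int b"
  have k: "(x + y)\<^sup>2 \<le> 2 * (x\<^sup>2 + y\<^sup>2)"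
    using zero_le_square[of "x - y"] by (simp add: power2_eq_square algebra_simps)
  have "(jbr (a+b))\<^sup>2 \<le> (2 * jbr a * jbr b)\<^sup>2"
  proof -
    have "(jbr (a+b))\<^sup>2 = 1 + (x + y)\<^sup>2" by (simp add: jbr_sq x_def y_def)
    also have "\<dots> \<le> 4 * ((1 + x\<^sup>2) * (1 + y\<^sup>2))"
    proof -
      have e: "4 * ((1 + x\<^sup>2) * (1 + y\<^sup>2)) = 4 + 4 * x\<^sup>2 + 4 * y\<^sup>2 + 4 * (x\<^sup>2 * y\<^sup>2)"
        by (simp add: algebra_simps)
      have "0 \<le> x\<^sup>2 * y\<^sup>2" by simp
      have g: "1+P \<le> 4+4*A+4*B+4*Q" if "P \<le> 2*(A+B)" "0\<le>A" "0\<le>B" "0\<le>Q" for A B P Q :: real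
        using that by (smt (verit))
      from g[OF k zero_le_power2[of x] zero_le_power2[of y] \<open>0 \<le> x\<^sup>2 * y\<^sup>2\<close>] e show ?thesis by simp
    qed
    also have "\<dots> = (2 * jbr a * jbr b)\<^sup>2"
      by (simp add: power_mult_distrib jbr_sq x_def y_def)
    finally show ?thesis .
  qed
  thus ?thesis
    by (rule power2_le_imp_le) (use jbr_pos[of a] jbr_pos[of b] in simp)
qed

lemma Q1_step:
  fixes a :: real and N :: nat
  assumes a: "0 < a" "a < 1"
  shows "a * real (Suc N) powr (a - 1) \<le> real (Suc N) powr a - real N powr a"
proof (cases "N = 0")
  case True thus ?thesis using a by simp
next
  case False
  define M where "M = real (Suc N)"
  have M: "M > 0" "M = real N + 1" by (simp_all add: M_def)
  have Np: "real N > 0" using False by simp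
  have "(real N / M) powr a * 1 powr (1 - a) \<le> a * (real N / M) + (1 - a) * 1"
    by (rule Youngs_inequality_0) (use a Np M in auto)
  hence y: "real N powr a / M powr a \<le> a * (real N / M) + (1 - a)"
    using Np M by (simp add: powr_divide)
  have Mpa: "M powr a > 0" using M by simp
  have "real N powr a \<le> M powr a * (a * (real N / M) + (1 - a))"
    using y Mpa by (simp add: divide_le_eq mult.commute)
  also have "\<dots> = M powr a - a * (M powr a / M)"
    using M by (simp add: field_simps)
  also have "M powr a / M = M powr (a - 1)"
    using M by (simp add: powr_diff)
  finally show ?thesis unfolding M_def by simp
qed

lemma Q1:
  fixes a :: real
  assumes a: "0 < a" "a < 1"
  shows "(\<Sum>k=1..N. real k powr (a - 1)) \<le> real N powr a / a"
proof (induction N)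
  case 0 thus ?case by simp
next
  case (Suc N)
  have "(\<Sum>k=1..Suc N. real k powr (a - 1)) = (\<Sum>k=1..N. real k powr (a - 1)) + real (Suc N) powr (a - 1)"
    by simp
  also have "\<dots> \<le> real N powr a / a + real (Suc N) powr (a - 1)" using Suc by simp
  also have "\<dots> \<le> real (Suc N) powr a / a"
  proof -
    have "real N powr a + a * real (Suc N) powr (a - 1) \<le> real (Suc N) powr a"
      using Q1_step[OF a, of N] by simp
    hence "(real N powr a + a * real (Suc N) powr (a - 1)) / a \<le> real (Suc N) powr a / a"
      using a by (intro divide_right_mono) auto
    also have "(real N powr a + a * real (Suc N) powr (a - 1)) / a = real N powr a / a + real (Suc N) powr (a - 1)"
      using a by (simp add: add_divide_distrib)
    finally show ?thesis .
  qed
  finally show ?case .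
qed

lemma sum_sym:
  fixes g :: "int \<Rightarrow> 'a::comm_monoid_add"
  shows "(\<Sum>k\<in>{- int N..int N}. g k) = g 0 + (\<Sum>k=1..N. g (int k) + g (- int k))"
proof (induction N)
  case 0 thus ?case by simp
next
  case (Suc N)
  have set: "{- int (Suc N)..int (Suc N)} = insert (- int (Suc N)) (insert (int (Suc N)) {- int N..int N})"
    by auto
  have "(\<Sum>k\<in>{- int (Suc N)..int (Suc N)}. g k) = g (- int (Suc N)) + (g (int (Suc N)) + (\<Sum>k\<in>{- int N..int N}. g k))"
    unfolding set by (subst sum.insert; simp)+
  also have "\<dots> = g 0 + (\<Sum>k=1..Suc N. g (int k) + g (- int k))"
    using Suc by (simp add: add_ac)
  finally show ?case .
qed

lemma lemQ:
  fixes e :: real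
  assumes e: "-1 < e"
  shows "\<exists>C>0. \<forall>N::nat. (\<Sum>k\<in>{- int N..int N}. jbr k powr e) \<le> C * jbr (int N) powr (1 + e)"
proof (cases "e \<ge> 0")
  case True
  show ?thesis
  proof (intro exI[of _ 3] conjI allI)
    fix N :: nat
    have "(\<Sum>k\<in>{- int N..int N}. jbr k powr e) \<le> (\<Sum>k\<in>{- int N..int N}. jbr (int N) powr e)"
    proof (rule sum_mono)
      fix k assume "k \<in> {- int N..int N}"
      hence "\<bar>k\<bar> \<le> \<bar>int N\<bar>" by auto
      hence "jbr k \<le> jbr (int N)" by (rule jbr_mono)
      thus "jbr k powr e \<le> jbr (int N) powr e" using True jbr_pos[of k] by (simp add: powr_mono2)
    qed
    also have "\<dots> = (2 * real N + 1) * jbr (int N) powr e" by simp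
    also have "\<dots> \<le> (3 * jbr (int N)) * jbr (int N) powr e"
    proof (rule mult_right_mono)
      have "real N \<le> jbr (int N)" using jbr_ge_abs[of "int N"] by simp
      thus "2 * real N + 1 \<le> 3 * jbr (int N)" using jbr_ge1[of "int N"] by linarith
    qed simp
    also have "\<dots> = 3 * jbr (int N) powr (1 + e)"
      using jbr_pos[of "int N"] by (simp add: powr_add)
    finally show "(\<Sum>k\<in>{- int N..int N}. jbr k powr e) \<le> 3 * jbr (int N) powr (1 + e)" .
  qed simp
next
  case False
  hence en: "e < 0" by simp
  define a where "a = 1 + e"
  have a: "0 < a" "a < 1" using e en by (auto simp: a_def)
  show ?thesis
  proof (intro exI[of _ "1 + 2 / a"] conjI allI)
    have "0 < 2 / a" using a by simp
    thus "0 < 1 + 2 / a" by linarith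
    fix N :: nat
    have "(\<Sum>k\<in>{- int N..int N}. jbr k powr e) = jbr 0 powr e + (\<Sum>k=1..N. jbr (int k) powr e + jbr (- int k) powr e)"
      by (rule sum_sym)
    also have "\<dots> \<le> 1 + (\<Sum>k=1..N. 2 * real k powr (a - 1))"
    proof (rule add_mono)
      show "jbr 0 powr e \<le> 1" by (simp add: jbr_def)
      show "(\<Sum>k=1..N. jbr (int k) powr e + jbr (- int k) powr e) \<le> (\<Sum>k=1..N. 2 * real k powr (a - 1))"
      proof (rule sum_mono)
        fix k assume k: "k \<in> {1..N}"
        have "real k \<le> jbr (int k)" using jbr_ge_abs[of "int k"] by simp
        hence "jbr (int k) powr e \<le> real k powr e"
          using k en by (intro powr_mono2') auto
        thus "jbr (int k) powr e + jbr (- int k) powr e \<le> 2 * real k powr (a - 1)"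
          by (simp add: a_def)
      qed
    qed
    also have "\<dots> = 1 + 2 * (\<Sum>k=1..N. real k powr (a - 1))"
      by (simp add: sum_distrib_left)
    also have "\<dots> \<le> 1 + 2 * (real N powr a / a)"
      using Q1[OF a, of N] by simp
    also have "\<dots> \<le> (1 + 2 / a) * jbr (int N) powr (1 + e)"
    proof -
      have h1: "1 \<le> jbr (int N) powr a" using jbr_ge1[of "int N"] a by (simp add: ge_one_powr_ge_zero)
      have "real N \<le> jbr (int N)" using jbr_ge_abs[of "int N"] by simp
      hence h2: "real N powr a \<le> jbr (int N) powr a" using a by (intro powr_mono2) auto
      have "1 + 2 * (real N powr a / a) \<le> jbr (int N) powr a + 2 * (jbr (int N) powr a / a)"
        using h1 h2 a by (intro add_mono) (auto simp: divide_right_mono)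
      also have "\<dots> = (1 + 2 / a) * jbr (int N) powr (1 + e)"
        by (simp add: a_def field_simps)
      finally show ?thesis .
    qed
    finally show "(\<Sum>k\<in>{- int N..int N}. jbr k powr e) \<le> (1 + 2 / a) * jbr (int N) powr (1 + e)" .
  qed
qed

lemma jbr2: "jbr (2 * n) \<le> 2 * jbr n"
proof -
  have "(jbr (2*n))\<^sup>2 \<le> (2 * jbr n)\<^sup>2"
    by (simp add: jbr_sq power_mult_distrib)
  thus ?thesis by (rule power2_le_imp_le) (use jbr_pos[of n] in simp)
qed

lemma jbr_le2: "\<bar>m\<bar> \<le> 2 * \<bar>n\<bar> \<Longrightarrow> jbr m \<le> 2 * jbr n"
proof -
  assume "\<bar>m\<bar> \<le> 2 * \<bar>n\<bar>"
  hence "\<bar>m\<bar> \<le> \<bar>2 * n\<bar>" by (simp add: abs_mult)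
  hence "jbr m \<le> jbr (2*n)" by (rule jbr_mono)
  thus ?thesis using jbr2[of n] by linarith
qed

lemma powr_transfer:
  fixes x y b :: real
  assumes "0 < x" "0 < y" "x \<le> 2 * y" "y \<le> 2 * x"
  shows "x powr b \<le> 2 powr \<bar>b\<bar> * y powr b"
proof (cases "b \<ge> 0")
  case True
  have "x powr b \<le> (2 * y) powr b" using assms True by (intro powr_mono2) auto
  thus ?thesis using True assms by (simp add: powr_mult)
next
  case False
  have "y / 2 \<le> x" using assms by simp
  hence "x powr b \<le> (y / 2) powr b" using assms False by (intro powr_mono2') auto
  also have "\<dots> = 2 powr (-b) * y powr b" using assms by (simp add: powr_divide powr_minus_divide)
  finally show ?thesis using False by simp
qed

lemma powr_transfer_neg:
  fixes x y a :: real
  assumes "0 < x" "0 < y" "y \<le> 2 * x" "0 \<le> a"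
  shows "x powr (-a) \<le> 2 powr a * y powr (-a)"
proof -
  have "y / 2 \<le> x" using assms by simp
  hence "x powr (-a) \<le> (y / 2) powr (-a)" using assms by (intro powr_mono2') auto
  also have "\<dots> = 2 powr a * y powr (-a)" using assms by (simp add: powr_divide powr_minus_divide)
  finally show ?thesis .
qed

lemma lemR:
  fixes a :: real
  assumes a: "0 < a" "a < 1"
  shows "\<exists>C>0. \<forall>P::int. (\<Sum>r\<in>{- \<bar>P\<bar>..\<bar>P\<bar>}. jbr (P + r) powr (2*a - 1) * jbr r powr (-a)) \<le> C * jbr P powr a"
proof -
  define b where "b = 2*a - 1"
  have b: "-1 < b" using a by (simp add: b_def)
  obtain C1 where C1: "C1 > 0" "\<And>N::nat. (\<Sum>k\<in>{- int N..int N}. jbr k powr (-a)) \<le> C1 * jbr (int N) powr (1 + -a)"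
    using lemQ[of "-a"] a by auto
  obtain C2 where C2: "C2 > 0" "\<And>N::nat. (\<Sum>k\<in>{- int N..int N}. jbr k powr b) \<le> C2 * jbr (int N) powr (1 + b)"
    using lemQ[of b] b by auto
  define C where "C = 2 powr \<bar>b\<bar> * C1 + 2 powr a * (C2 * 2 powr (1 + b))"
  show ?thesis
  proof (intro exI[of _ C] conjI allI)
    show "C > 0" unfolding C_def using C1 C2 by (intro add_pos_pos mult_pos_pos) auto
    fix P :: int
    define I where "I = {- \<bar>P\<bar>..\<bar>P\<bar>}"
    have tm: "jbr (P + r) powr b * jbr r powr (-a) \<le>
          2 powr \<bar>b\<bar> * jbr P powr b * jbr r powr (-a) + 2 powr a * jbr P powr (-a) * jbr (P + r) powr b"
      if r: "r \<in> I" for r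
    proof (cases "2 * \<bar>r\<bar> \<le> \<bar>P\<bar>")
      case True
      have "jbr (P + r) \<le> 2 * jbr P" using r by (intro jbr_le2) (auto simp: I_def)
      moreover have "jbr P \<le> 2 * jbr (P + r)" using True by (intro jbr_le2) (auto simp: abs_if split: if_splits)
      ultimately have "jbr (P + r) powr b \<le> 2 powr \<bar>b\<bar> * jbr P powr b"
        by (intro powr_transfer) (auto simp: jbr_pos)
      hence "jbr (P + r) powr b * jbr r powr (-a) \<le> 2 powr \<bar>b\<bar> * jbr P powr b * jbr r powr (-a)"
        by (intro mult_right_mono) auto
      moreover have "0 \<le> 2 powr a * jbr P powr (-a) * jbr (P + r) powr b" by simp
      ultimately show ?thesis by linarith
    next
      case False
      have "jbr P \<le> 2 * jbr r" using False by (intro jbr_le2) auto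
      hence "jbr r powr (-a) \<le> 2 powr a * jbr P powr (-a)"
        using a by (intro powr_transfer_neg) (auto simp: jbr_pos)
      hence "jbr (P + r) powr b * jbr r powr (-a) \<le> jbr (P + r) powr b * (2 powr a * jbr P powr (-a))"
        by (intro mult_left_mono) auto
      also have "\<dots> = 2 powr a * jbr P powr (-a) * jbr (P + r) powr b" by (simp add: mult_ac)
      finally have h: "jbr (P + r) powr b * jbr r powr (-a) \<le> 2 powr a * jbr P powr (-a) * jbr (P + r) powr b" .
      moreover have "0 \<le> 2 powr \<bar>b\<bar> * jbr P powr b * jbr r powr (-a)" by simp
      ultimately show ?thesis by linarith
    qed
    have "(\<Sum>r\<in>I. jbr (P + r) powr b * jbr r powr (-a)) \<le>
       (\<Sum>r\<in>I. 2 powr \<bar>b\<bar> * jbr P powr b * jbr r powr (-a) + 2 powr a * jbr P powr (-a) * jbr (P + r) powr b)"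
      by (rule sum_mono) (rule tm)
    also have "\<dots> = 2 powr \<bar>b\<bar> * jbr P powr b * (\<Sum>r\<in>I. jbr r powr (-a)) + 2 powr a * jbr P powr (-a) * (\<Sum>r\<in>I. jbr (P + r) powr b)"
      by (simp add: sum.distrib sum_distrib_left)
    also have "\<dots> \<le> 2 powr \<bar>b\<bar> * jbr P powr b * (C1 * jbr P powr (1 - a)) + 2 powr a * jbr P powr (-a) * (C2 * 2 powr (1 + b) * jbr P powr (1 + b))"
    proof (rule add_mono)
      have "(\<Sum>r\<in>I. jbr r powr (-a)) \<le> C1 * jbr (int (nat \<bar>P\<bar>)) powr (1 + -a)"
        using C1(2)[of "nat \<bar>P\<bar>"] by (simp add: I_def)
      also have "jbr (int (nat \<bar>P\<bar>)) = jbr P" by simp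
      finally show "2 powr \<bar>b\<bar> * jbr P powr b * (\<Sum>r\<in>I. jbr r powr (-a)) \<le> 2 powr \<bar>b\<bar> * jbr P powr b * (C1 * jbr P powr (1 - a))"
        by (intro mult_left_mono) auto
      have "(\<Sum>r\<in>I. jbr (P + r) powr b) = (\<Sum>k\<in>(\<lambda>r. P + r) ` I. jbr k powr b)"
        by (subst sum.reindex) (auto simp: inj_on_def)
      also have "\<dots> \<le> (\<Sum>k\<in>{- int (nat (2*\<bar>P\<bar>))..int (nat (2*\<bar>P\<bar>))}. jbr k powr b)"
        by (rule sum_mono2) (auto simp: I_def)
      also have "\<dots> \<le> C2 * jbr (int (nat (2*\<bar>P\<bar>))) powr (1 + b)" by (rule C2(2))
      also have "\<dots> \<le> C2 * (2 powr (1 + b) * jbr P powr (1 + b))"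
      proof -
        have "jbr (int (nat (2*\<bar>P\<bar>))) \<le> 2 * jbr P" by (intro jbr_le2) auto
        hence "jbr (int (nat (2*\<bar>P\<bar>))) powr (1 + b) \<le> (2 * jbr P) powr (1 + b)"
          using b by (intro powr_mono2) (auto simp: jbr_pos less_imp_le)
        thus ?thesis using C2(1) by (simp add: powr_mult)
      qed
      finally show "2 powr a * jbr P powr (-a) * (\<Sum>r\<in>I. jbr (P + r) powr b) \<le> 2 powr a * jbr P powr (-a) * (C2 * 2 powr (1 + b) * jbr P powr (1 + b))"
        by (intro mult_left_mono) (auto simp: mult_ac)
    qed
    also have "\<dots> = C * jbr P powr a"
    proof -
      have e1: "jbr P powr b * jbr P powr (1 - a) = jbr P powr a"
        using jbr_pos[of P] by (simp add: powr_add[symmetric] b_def)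
      have e2: "jbr P powr (-a) * jbr P powr (1 + b) = jbr P powr a"
        using jbr_pos[of P] by (simp add: powr_add[symmetric] b_def)
      have f1: "2 powr \<bar>b\<bar> * jbr P powr b * (C1 * jbr P powr (1 - a)) = 2 powr \<bar>b\<bar> * C1 * (jbr P powr b * jbr P powr (1 - a))"
        by (simp add: mult_ac)
      have f2: "2 powr a * jbr P powr (-a) * (C2 * 2 powr (1 + b) * jbr P powr (1 + b)) = 2 powr a * (C2 * 2 powr (1 + b)) * (jbr P powr (-a) * jbr P powr (1 + b))"
        by (simp add: mult_ac)
      show ?thesis unfolding f1 f2 e1 e2 C_def by (simp add: distrib_right)
    qed
    finally show "(\<Sum>r\<in>{- \<bar>P\<bar>..\<bar>P\<bar>}. jbr (P + r) powr (2*a - 1) * jbr r powr (-a)) \<le> C * jbr P powr a"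
      unfolding I_def b_def .
  qed
qed

definition wt :: "real \<Rightarrow> int \<Rightarrow> ennreal" where
  "wt e n = ennreal (jbr n powr e)"

lemma wt_mult: "wt a n * wt b n = wt (a + b) n"
  unfolding wt_def by (simp add: ennreal_mult[symmetric] powr_add)

lemma wt_sq: "(wt a n)\<^sup>2 = wt (2 * a) n"
  proof -
  have "(jbr n powr a)\<^sup>2 = jbr n powr (2 * a)"
    using jbr_pos[of n] by (simp add: powr_realpow[symmetric] powr_powr mult.commute less_imp_le)
  thus ?thesis unfolding wt_def by (simp add: ennreal_power)
qed

lemma wt_0[simp]: "wt 0 n = 1"
proof -
  have "jbr n \<noteq> 0" using jbr_pos[of n] by simp
  thus ?thesis unfolding wt_def by simp
qed

lemma wt_le_1: "e \<le> 0 \<Longrightarrow> wt e n \<le> 1"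
  proof -
  assume "e \<le> 0"
  hence "jbr n powr e \<le> jbr n powr 0" using jbr_ge1[of n] by (intro powr_mono) auto
  thus ?thesis unfolding wt_def using jbr_pos[of n] by simp
qed

lemma wt_add: "0 \<le> s \<Longrightarrow> wt s (a + b) \<le> ennreal (2 powr s) * wt s a * wt s b"
proof -
  assume s: "0 \<le> s"
  have "jbr (a + b) powr s \<le> (2 * jbr a * jbr b) powr s"
    using jbr_add[of a b] s by (intro powr_mono2) (auto simp: jbr_pos less_imp_le)
  also have "\<dots> = 2 powr s * jbr a powr s * jbr b powr s"
    using jbr_pos[of a] jbr_pos[of b] by (simp add: powr_mult)
  finally show ?thesis unfolding wt_def by (simp add: ennreal_mult[symmetric])
qed

lemma Z2_real: "(\<Sum>k=1..N. 1 / (1 + (real k)\<^sup>2)) \<le> 2 - 2 / (real N + 1)"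
proof (induction N)
  case 0 thus ?case by simp
next
  case (Suc N)
  define x where "x = real N"
  have x: "x \<ge> 0" by (simp add: x_def)
  have step: "1 / (1 + (x + 1)\<^sup>2) \<le> 2 / (x + 1) - 2 / (x + 2)"
  proof -
    have "2 / (x + 1) - 2 / (x + 2) = 2 / ((x + 1) * (x + 2))"
      using x by (simp add: field_simps)
    also have "1 / (1 + (x + 1)\<^sup>2) \<le> 2 / ((x + 1) * (x + 2))"
    proof -
      have "(x + 1) * (x + 2) \<le> 2 * (1 + (x + 1)\<^sup>2)"
        using x mult_nonneg_nonneg[OF x x] by (simp add: power2_eq_square algebra_simps)
      hence h: "2 / (2 * (1 + (x + 1)\<^sup>2)) \<le> 2 / ((x + 1) * (x + 2))"
        using x by (intro frac_le) auto
      have eq0: "2 / (2 * y) = 1 / y" for y :: real by simp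
      have eq: "2 / (2 * (1 + (x + 1)\<^sup>2)) = 1 / (1 + (x + 1)\<^sup>2)" by (rule eq0)
      show ?thesis using h unfolding eq .
    qed
    finally show ?thesis .
  qed
  have "(\<Sum>k=1..Suc N. 1 / (1 + (real k)\<^sup>2)) = (\<Sum>k=1..N. 1 / (1 + (real k)\<^sup>2)) + 1 / (1 + (x + 1)\<^sup>2)"
    by (simp add: x_def add.commute)
  also have "\<dots> \<le> 2 - 2 / (x + 1) + (2 / (x + 1) - 2 / (x + 2))"
    using Suc step by (simp add: x_def)
  also have "\<dots> = 2 - 2 / (real (Suc N) + 1)" by (simp add: x_def add.commute)
  finally show ?case .
qed

lemma Z2: "SI (\<lambda>q. wt (-2) q) \<le> 5"
proof (rule SI_trunc)
  fix N :: nat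
  have e: "jbr k powr (-2) = 1 / (1 + (real_of_int k)\<^sup>2)" for k
    using jbr_pos[of k] by (simp add: powr_minus powr_realpow jbr_sq divide_inverse)
  have "(\<Sum>k\<in>{- int N..int N}. jbr k powr (-2)) = jbr 0 powr (-2) + (\<Sum>k=1..N. jbr (int k) powr (-2) + jbr (- int k) powr (-2))"
    by (rule sum_sym)
  also have "\<dots> = 1 + 2 * (\<Sum>k=1..N. 1 / (1 + (real k)\<^sup>2))"
    by (simp add: e sum_distrib_left)
  also have "\<dots> \<le> 1 + 2 * 2" using Z2_real[of N]
    using Z2_real[of N] divide_nonneg_nonneg[of 2 "real N + 1"] by linarith
  finally have "(\<Sum>k\<in>{- int N..int N}. jbr k powr (-2)) \<le> 5" by simp
  thus "(\<Sum>n\<in>{- int N..int N}. wt (-2) n) \<le> 5"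
    unfolding wt_def by (subst sum_ennreal) (auto simp: ennreal_le_iff[symmetric] simp del: ennreal_le_iff)
qed

lemma SI_cmult_right: "SI (\<lambda>n. f n * c) = SI f * c"
  using SI_cmult[of c f] by (simp add: mult.commute)

lemma lemW:
  fixes b c :: "int \<Rightarrow> ennreal" and s :: real
  assumes s: "0 \<le> s"
  shows "SI (\<lambda>m. wt (2 * s) m * (SI (\<lambda>q. b q * wt (-1) q * c (m - q)))\<^sup>2)
     \<le> ennreal (4 powr s * 5) * SI (\<lambda>q. wt (2 * s) q * (b q)\<^sup>2) * SI (\<lambda>q. wt (2 * s) q * (c q)\<^sup>2)"
proof -
  define F where "F m q = wt s q * b q * (wt s (m - q) * c (m - q))" for m q
  have pt: "wt (2 * s) m * (SI (\<lambda>q. b q * wt (-1) q * c (m - q)))\<^sup>2 \<le> ennreal (4 powr s * 5) * SI (\<lambda>q. (F m q)\<^sup>2)" for m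
  proof -
    have A: "wt (2 * s) m * (SI (\<lambda>q. b q * wt (-1) q * c (m - q)))\<^sup>2 = (wt s m * SI (\<lambda>q. b q * wt (-1) q * c (m - q)))\<^sup>2"
      by (simp add: power_mult_distrib wt_sq)
    have "wt s m * SI (\<lambda>q. b q * wt (-1) q * c (m - q)) = SI (\<lambda>q. wt s m * (b q * wt (-1) q * c (m - q)))"
      by (rule SI_cmult[symmetric])
    also have "\<dots> \<le> SI (\<lambda>q. ennreal (2 powr s) * (F m q * wt (-1) q))"
    proof (rule SI_mono)
      fix q
      have "wt s m \<le> ennreal (2 powr s) * wt s q * wt s (m - q)"
        using wt_add[OF s, of q "m - q"] by simp
      hence "wt s m * (b q * wt (-1) q * c (m - q)) \<le> ennreal (2 powr s) * wt s q * wt s (m - q) * (b q * wt (-1) q * c (m - q))"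
        by (rule mult_right_mono) simp
      also have "\<dots> = ennreal (2 powr s) * (F m q * wt (-1) q)"
        by (simp add: F_def mult_ac)
      finally show "wt s m * (b q * wt (-1) q * c (m - q)) \<le> ennreal (2 powr s) * (F m q * wt (-1) q)" .
    qed
    also have "\<dots> = ennreal (2 powr s) * SI (\<lambda>q. F m q * wt (-1) q)"
      by (rule SI_cmult)
    finally have B: "wt s m * SI (\<lambda>q. b q * wt (-1) q * c (m - q)) \<le> ennreal (2 powr s) * SI (\<lambda>q. F m q * wt (-1) q)" .
    have "wt (2 * s) m * (SI (\<lambda>q. b q * wt (-1) q * c (m - q)))\<^sup>2 \<le> (ennreal (2 powr s) * SI (\<lambda>q. F m q * wt (-1) q))\<^sup>2"
      unfolding A by (rule power_mono[OF B]) simp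
    also have "\<dots> = (ennreal (2 powr s))\<^sup>2 * (SI (\<lambda>q. F m q * wt (-1) q))\<^sup>2"
      by (simp add: power_mult_distrib)
    also have "\<dots> \<le> (ennreal (2 powr s))\<^sup>2 * (SI (\<lambda>q. (F m q)\<^sup>2) * SI (\<lambda>q. (wt (-1) q)\<^sup>2))"
      by (rule mult_left_mono) (rule CS_single, simp)
    also have "SI (\<lambda>q. (wt (-1) q)\<^sup>2) = SI (\<lambda>q. wt (-2) q)" by (simp add: wt_sq)
    also have "(ennreal (2 powr s))\<^sup>2 * (SI (\<lambda>q. (F m q)\<^sup>2) * SI (\<lambda>q. wt (-2) q)) \<le> (ennreal (2 powr s))\<^sup>2 * (SI (\<lambda>q. (F m q)\<^sup>2) * 5)"
      by (intro mult_left_mono Z2) simp_all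
    also have "\<dots> = ennreal (4 powr s * 5) * SI (\<lambda>q. (F m q)\<^sup>2)"
    proof -
      have r: "(2 powr s)\<^sup>2 = (4::real) powr s"
        by (simp add: power2_eq_square powr_mult[symmetric])
      have "(ennreal (2 powr s))\<^sup>2 = ennreal (4 powr s)"
        by (simp add: ennreal_power r)
      thus ?thesis by (simp add: ennreal_mult mult_ac)
    qed
    finally show ?thesis .
  qed
  have "SI (\<lambda>m. wt (2 * s) m * (SI (\<lambda>q. b q * wt (-1) q * c (m - q)))\<^sup>2) \<le> SI (\<lambda>m. ennreal (4 powr s * 5) * SI (\<lambda>q. (F m q)\<^sup>2))"
    by (rule SI_mono) (rule pt)
  also have "\<dots> = ennreal (4 powr s * 5) * SI (\<lambda>m. SI (\<lambda>q. (F m q)\<^sup>2))"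
    by (rule SI_cmult)
  also have "SI (\<lambda>m. SI (\<lambda>q. (F m q)\<^sup>2)) = SI (\<lambda>q. SI (\<lambda>m. (F m q)\<^sup>2))"
    by (rule SI_swap)
  also have "\<dots> = SI (\<lambda>q. wt (2 * s) q * (b q)\<^sup>2 * SI (\<lambda>m. wt (2 * s) (m - q) * (c (m - q))\<^sup>2))"
    by (simp add: F_def power_mult_distrib wt_sq mult_ac SI_cmult[symmetric])
  also have "\<dots> = SI (\<lambda>q. wt (2 * s) q * (b q)\<^sup>2) * SI (\<lambda>q. wt (2 * s) q * (c q)\<^sup>2)"
    by (simp add: SI_shift[where f = "\<lambda>n. wt (2 * s) n * (c n)\<^sup>2"] SI_cmult_right)
  finally show ?thesis by (simp add: mult.assoc)
qed

lemma wt_sq2: "b = 2 * a \<Longrightarrow> (wt a n)\<^sup>2 = wt b n"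
  by (simp add: wt_sq)

lemma wt_inv: "wt (-s) x * wt s x = 1"
  by (simp add: wt_mult)

lemma wt_ge_1: "0 \<le> e \<Longrightarrow> 1 \<le> wt e n"
  unfolding wt_def using jbr_ge1[of n] by (simp add: ge_one_powr_ge_zero)

lemma kernel_bound:
  fixes s CR :: real
  assumes CR: "\<And>P::int. (\<Sum>r\<in>{- \<bar>P\<bar>..\<bar>P\<bar>}. jbr (P + r) powr (2*(2 * s) - 1) * jbr r powr (-(2 * s))) \<le> CR * jbr P powr (2 * s)"
  shows "wt (-(2 * s)) p * SI (\<lambda>n. if \<bar>n - p\<bar> \<le> \<bar>p\<bar> then wt (4 * s - 1) n * wt (-(2 * s)) (n - p) else 0) \<le> ennreal CR"
proof -
  define h where "h n = (if \<bar>n - p\<bar> \<le> \<bar>p\<bar> then wt (4 * s - 1) n * wt (-(2 * s)) (n - p) else 0)" for n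
  have "SI h = SI (\<lambda>r. h (r - (- p)))" by (rule SI_shift[symmetric])
  also have "\<dots> = SI (\<lambda>r. h (r + p))" by simp
  also have "\<dots> = (\<Sum>r\<in>{- \<bar>p\<bar>..\<bar>p\<bar>}. h (r + p))"
    by (rule SI_finite) (auto simp: h_def)
  also have "\<dots> = (\<Sum>r\<in>{- \<bar>p\<bar>..\<bar>p\<bar>}. ennreal (jbr (p + r) powr (2*(2 * s) - 1) * jbr r powr (-(2 * s))))"
  proof (rule sum.cong)
    fix r assume "r \<in> {- \<bar>p\<bar>..\<bar>p\<bar>}"
    hence "\<bar>r\<bar> \<le> \<bar>p\<bar>" by auto
    thus "h (r + p) = ennreal (jbr (p + r) powr (2*(2 * s) - 1) * jbr r powr (-(2 * s)))"
      by (simp add: h_def wt_def ennreal_mult add.commute)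
  qed simp
  also have "\<dots> = ennreal (\<Sum>r\<in>{- \<bar>p\<bar>..\<bar>p\<bar>}. jbr (p + r) powr (2*(2 * s) - 1) * jbr r powr (-(2 * s)))"
    by (rule sum_ennreal) simp
  also have "\<dots> \<le> ennreal (CR * jbr p powr (2 * s))"
    using CR[of p] by (simp add: ennreal_leI)
  finally have "SI h \<le> ennreal (CR * jbr p powr (2 * s))" .
  hence "wt (-(2 * s)) p * SI h \<le> wt (-(2 * s)) p * ennreal (CR * jbr p powr (2 * s))"
    by (rule mult_left_mono) simp
  also have "\<dots> = ennreal CR"
  proof -
    have e1: "jbr p powr (-(2 * s)) * (CR * jbr p powr (2 * s)) = CR"
      using jbr_pos[of p] by (simp add: powr_minus field_simps)
    have e2: "ennreal (jbr p powr (-(2 * s))) * ennreal (CR * jbr p powr (2 * s)) = ennreal (jbr p powr (-(2 * s)) * (CR * jbr p powr (2 * s)))"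
      by (rule ennreal_mult'[symmetric]) simp
    show ?thesis by (simp only: wt_def e2 e1)
  qed
  finally show ?thesis by (simp add: h_def)
qed

lemma lemHalf:
  fixes u w G :: "int \<Rightarrow> ennreal" and s CR :: real
  assumes CR: "\<And>P::int. (\<Sum>r\<in>{- \<bar>P\<bar>..\<bar>P\<bar>}. jbr (P + r) powr (2*(2 * s) - 1) * jbr r powr (-(2 * s))) \<le> CR * jbr P powr (2 * s)"
  shows "(SI (\<lambda>n. SI (\<lambda>p. if \<bar>n - p\<bar> \<le> \<bar>p\<bar> then G n * wt (2 * s - 1/2) n * u p * w (n - p) else 0)))\<^sup>2
    \<le> ennreal CR * SI (\<lambda>p. wt (2 * s) p * (u p)\<^sup>2) * SI (\<lambda>p. wt (2 * s) p * (w p)\<^sup>2) * SI (\<lambda>n. (G n)\<^sup>2)"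
proof -
  define f where "f n p = (if \<bar>n - p\<bar> \<le> \<bar>p\<bar> then wt (2 * s - 1/2) n * wt (-s) p * wt (-s) (n - p) * (wt s p * u p) else 0)" for n p
  define g where "g n p = G n * (wt s (n - p) * w (n - p))" for n p
  have fg: "(if \<bar>n - p\<bar> \<le> \<bar>p\<bar> then G n * wt (2 * s - 1/2) n * u p * w (n - p) else 0) = f n p * g n p" for n p
  proof -
    have "wt (2 * s - 1/2) n * wt (-s) p * wt (-s) (n - p) * (wt s p * u p) * (G n * (wt s (n - p) * w (n - p)))
       = G n * wt (2 * s - 1/2) n * u p * w (n - p) * ((wt (-s) p * wt s p) * (wt (-s) (n - p) * wt s (n - p)))"
      by (simp add: mult_ac)
    thus ?thesis by (simp add: f_def g_def wt_inv)
  qed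
  have f2: "SI (\<lambda>n. SI (\<lambda>p. (f n p)\<^sup>2)) \<le> ennreal CR * SI (\<lambda>p. wt (2 * s) p * (u p)\<^sup>2)"
  proof -
    have "SI (\<lambda>n. SI (\<lambda>p. (f n p)\<^sup>2)) = SI (\<lambda>p. SI (\<lambda>n. (f n p)\<^sup>2))" by (rule SI_swap)
    also have "\<dots> = SI (\<lambda>p. (wt (2 * s) p * (u p)\<^sup>2) * (wt (-(2 * s)) p * SI (\<lambda>n. if \<bar>n - p\<bar> \<le> \<bar>p\<bar> then wt (4 * s - 1) n * wt (-(2 * s)) (n - p) else 0)))"
    proof (rule nn_integral_cong)
      fix p
      have q1: "(wt (2 * s - 1/2) n)\<^sup>2 = wt (4 * s - 1) n" for n by (rule wt_sq2) simp
      have q2: "(wt (-s) n)\<^sup>2 = wt (-(2 * s)) n" for n by (rule wt_sq2) simp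
      have q3: "(wt s n)\<^sup>2 = wt (2 * s) n" for n by (rule wt_sq2) simp
      have "(f n p)\<^sup>2 = (wt (2 * s) p * (u p)\<^sup>2) * wt (-(2 * s)) p * (if \<bar>n - p\<bar> \<le> \<bar>p\<bar> then wt (4 * s - 1) n * wt (-(2 * s)) (n - p) else 0)" for n
      proof (cases "\<bar>n - p\<bar> \<le> \<bar>p\<bar>")
        case True
        hence "(f n p)\<^sup>2 = wt (4 * s - 1) n * wt (-(2 * s)) p * wt (-(2 * s)) (n - p) * (wt (2 * s) p * (u p)\<^sup>2)"
          by (simp only: f_def if_True power_mult_distrib q1 q2 q3)
        thus ?thesis using True by (simp add: mult_ac)
      qed (simp add: f_def)
      thus "SI (\<lambda>n. (f n p)\<^sup>2) = (wt (2 * s) p * (u p)\<^sup>2) * (wt (-(2 * s)) p * SI (\<lambda>n. if \<bar>n - p\<bar> \<le> \<bar>p\<bar> then wt (4 * s - 1) n * wt (-(2 * s)) (n - p) else 0))"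
        by (simp add: SI_cmult mult.assoc)
    qed
    also have "\<dots> \<le> SI (\<lambda>p. (wt (2 * s) p * (u p)\<^sup>2) * ennreal CR)"
      by (intro SI_mono mult_left_mono kernel_bound[OF CR]) simp
    also have "\<dots> = ennreal CR * SI (\<lambda>p. wt (2 * s) p * (u p)\<^sup>2)"
      by (subst SI_cmult_right) (rule mult.commute)
    finally show ?thesis .
  qed
  have g2: "SI (\<lambda>n. SI (\<lambda>p. (g n p)\<^sup>2)) = SI (\<lambda>p. wt (2 * s) p * (w p)\<^sup>2) * SI (\<lambda>n. (G n)\<^sup>2)"
  proof -
    have "SI (\<lambda>n. SI (\<lambda>p. (g n p)\<^sup>2)) = SI (\<lambda>n. (G n)\<^sup>2 * SI (\<lambda>p. wt (2 * s) (n - p) * (w (n - p))\<^sup>2))"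
      by (simp add: g_def power_mult_distrib wt_sq SI_cmult mult.assoc)
    also have "\<dots> = SI (\<lambda>n. (G n)\<^sup>2 * SI (\<lambda>p. wt (2 * s) p * (w p)\<^sup>2))"
      by (simp add: SI_shift2[where f = "\<lambda>p. wt (2 * s) p * (w p)\<^sup>2"])
    also have "\<dots> = SI (\<lambda>p. wt (2 * s) p * (w p)\<^sup>2) * SI (\<lambda>n. (G n)\<^sup>2)"
      by (simp add: SI_cmult_right mult.commute)
    finally show ?thesis .
  qed
  have "(SI (\<lambda>n. SI (\<lambda>p. if \<bar>n - p\<bar> \<le> \<bar>p\<bar> then G n * wt (2 * s - 1/2) n * u p * w (n - p) else 0)))\<^sup>2
      = (SI (\<lambda>n. SI (\<lambda>p. f n p * g n p)))\<^sup>2" by (simp add: fg)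
  also have "\<dots> \<le> SI (\<lambda>n. SI (\<lambda>p. (f n p)\<^sup>2)) * SI (\<lambda>n. SI (\<lambda>p. (g n p)\<^sup>2))"
    by (rule CS_pair)
  also have "\<dots> \<le> ennreal CR * SI (\<lambda>p. wt (2 * s) p * (u p)\<^sup>2) * (SI (\<lambda>p. wt (2 * s) p * (w p)\<^sup>2) * SI (\<lambda>n. (G n)\<^sup>2))"
    unfolding g2 by (rule mult_right_mono[OF f2]) simp
  finally show ?thesis by (simp add: mult.assoc)
qed

lemma ennreal_sq_le_cancel:
  fixes X K :: ennreal
  assumes "X * X \<le> K * X" "X < \<infinity>"
  shows "X \<le> K"
proof (cases "X = 0")
  case True thus ?thesis by simp
next
  case False
  have "X * X \<le> X * K" using assms(1) by (simp add: mult.commute)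
  thus ?thesis using False assms(2) by (subst (asm) ennreal_mult_le_mult_iff) auto
qed

lemma max_sq_bound:
  fixes X D1 D2 K :: ennreal
  assumes "X \<le> D1 + D2" "D1\<^sup>2 \<le> K * X" "D2\<^sup>2 \<le> K * X" "X < \<infinity>"
  shows "X \<le> 4 * K"
proof -
  define M where "M = max D1 D2"
  have "D1 + D2 \<le> M + M" unfolding M_def by (intro add_mono) auto
  hence "X \<le> M + M" using assms(1) by (rule order_trans[rotated])
  hence "X * X \<le> (M + M) * (M + M)" by (intro mult_mono) auto
  also have "\<dots> = 4 * M\<^sup>2"
  proof -
    have "M + M = 2 * M" by (simp add: mult_2)
    thus ?thesis by (simp add: power2_eq_square mult_ac)
  qed
  also have "M\<^sup>2 \<le> K * X" unfolding M_def using assms(2,3) by (cases "D1 \<le> D2") (auto simp: max_def)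
  hence "4 * M\<^sup>2 \<le> 4 * (K * X)" by (rule mult_left_mono) simp
  finally have "X * X \<le> (4 * K) * X" by (simp add: mult.assoc)
  thus ?thesis using assms(4) by (rule ennreal_sq_le_cancel)
qed

lemma le_wt: "0 \<le> e \<Longrightarrow> x \<le> wt e n * x"
  using mult_right_mono[OF wt_ge_1[of e n], of x] by simp

lemma lemP:
  fixes s :: real
  assumes s: "0 < s" "s < 1/2"
  shows "\<exists>K::real. K \<ge> 0 \<and> (\<forall>u w :: int \<Rightarrow> ennreal. SI (\<lambda>p. wt (2 * s) p * (u p)\<^sup>2) < \<infinity> \<longrightarrow> SI (\<lambda>p. wt (2 * s) p * (w p)\<^sup>2) < \<infinity> \<longrightarrow>
     SI (\<lambda>n. wt (4 * s - 1) n * (SI (\<lambda>p. u p * w (n - p)))\<^sup>2) \<le> ennreal K * SI (\<lambda>p. wt (2 * s) p * (u p)\<^sup>2) * SI (\<lambda>p. wt (2 * s) p * (w p)\<^sup>2))"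
proof -
  obtain CR where CR0: "CR > 0" and CR: "\<And>P::int. (\<Sum>r\<in>{- \<bar>P\<bar>..\<bar>P\<bar>}. jbr (P + r) powr (2*(2 * s) - 1) * jbr r powr (-(2 * s))) \<le> CR * jbr P powr (2 * s)"
    using lemR[of "2 * s"] s by auto
  have e4: "ennreal (4 * CR) = 4 * ennreal CR" using CR0 by (simp add: ennreal_mult)
  show ?thesis
  proof (intro exI[of _ "4 * CR"] conjI allI impI)
    show "0 \<le> 4 * CR" using CR0 by simp
    fix u w :: "int \<Rightarrow> ennreal"
    define Nu where "Nu = SI (\<lambda>p. wt (2 * s) p * (u p)\<^sup>2)"
    define Nw where "Nw = SI (\<lambda>p. wt (2 * s) p * (w p)\<^sup>2)"
    assume fu: "SI (\<lambda>p. wt (2 * s) p * (u p)\<^sup>2) < \<infinity>" and fw: "SI (\<lambda>p. wt (2 * s) p * (w p)\<^sup>2) < \<infinity>"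
    define conv where "conv n = SI (\<lambda>p. u p * w (n - p))" for n
    have conv_fin: "conv n < \<infinity>" for n
    proof -
      have "(conv n)\<^sup>2 \<le> SI (\<lambda>p. (u p)\<^sup>2) * SI (\<lambda>p. (w (n - p))\<^sup>2)"
        unfolding conv_def by (rule CS_single)
      also have "SI (\<lambda>p. (w (n - p))\<^sup>2) = SI (\<lambda>p. (w p)\<^sup>2)" by (rule SI_shift2)
      also have "SI (\<lambda>p. (u p)\<^sup>2) * SI (\<lambda>p. (w p)\<^sup>2) \<le> Nu * Nw"
        unfolding Nu_def Nw_def
        using s(1) by (intro mult_mono SI_mono le_wt) auto
      finally have c: "(conv n)\<^sup>2 \<le> Nu * Nw" .
      have "Nu * Nw < \<infinity>" using fu fw unfolding Nu_def Nw_def by (simp add: ennreal_mult_less_top)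
      hence "(conv n)\<^sup>2 < \<infinity>" using c by (rule le_less_trans[rotated])
      thus ?thesis by (cases "conv n = 0") (auto simp: power2_eq_square ennreal_mult_less_top)
    qed
    define H1 where "H1 n = SI (\<lambda>p. if \<bar>n - p\<bar> \<le> \<bar>p\<bar> then u p * w (n - p) else 0)" for n
    define H2 where "H2 n = SI (\<lambda>p. if \<bar>n - p\<bar> \<le> \<bar>p\<bar> then w p * u (n - p) else 0)" for n
    have conv_split: "conv n \<le> H1 n + H2 n" for n
    proof -
      have "conv n \<le> SI (\<lambda>p. (if \<bar>n - p\<bar> \<le> \<bar>p\<bar> then u p * w (n - p) else 0) + (if \<bar>p\<bar> \<le> \<bar>n - p\<bar> then u p * w (n - p) else 0))"
        unfolding conv_def by (rule SI_mono) auto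
      also have "\<dots> = H1 n + SI (\<lambda>p. if \<bar>p\<bar> \<le> \<bar>n - p\<bar> then u p * w (n - p) else 0)"
        unfolding H1_def by (rule SI_add)
      also have "SI (\<lambda>p. if \<bar>p\<bar> \<le> \<bar>n - p\<bar> then u p * w (n - p) else 0) = H2 n"
      proof -
        have "SI (\<lambda>p. if \<bar>p\<bar> \<le> \<bar>n - p\<bar> then u p * w (n - p) else 0) =
              SI (\<lambda>p. (\<lambda>q. if \<bar>n - q\<bar> \<le> \<bar>q\<bar> then w q * u (n - q) else 0) (n - p))"
        proof -
          have nn: "n - (n - x) = x" for x :: int by simp
          show ?thesis by (simp only: nn mult.commute)
        qed
        also have "\<dots> = H2 n" unfolding H2_def by (rule SI_shift2)
        finally show ?thesis .
      qed
      finally show ?thesis .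
    qed
    show "SI (\<lambda>n. wt (4 * s - 1) n * (SI (\<lambda>p. u p * w (n - p)))\<^sup>2) \<le> ennreal (4 * CR) * SI (\<lambda>p. wt (2 * s) p * (u p)\<^sup>2) * SI (\<lambda>p. wt (2 * s) p * (w p)\<^sup>2)"
    proof (rule SI_trunc)
      fix N :: nat
      define I where "I = {- int N..int N}"
      define X where "X = (\<Sum>n\<in>I. wt (4 * s - 1) n * (conv n)\<^sup>2)"
      define G where "G n = (if n \<in> I then wt (2 * s - 1/2) n * conv n else 0)" for n
      have q1: "(wt (2 * s - 1/2) n)\<^sup>2 = wt (4 * s - 1) n" for n by (rule wt_sq2) simp
      have XG: "SI (\<lambda>n. (G n)\<^sup>2) = X"
        unfolding X_def by (subst SI_finite[of I]) (auto simp: I_def G_def power_mult_distrib q1)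
      have pt: "G n * wt (2 * s - 1/2) n * conv n = wt (4 * s - 1) n * (conv n)\<^sup>2" if "n \<in> I" for n
      proof -
        have "G n * wt (2 * s - 1/2) n * conv n = (wt (2 * s - 1/2) n)\<^sup>2 * (conv n)\<^sup>2"
          using that by (simp add: G_def power2_eq_square mult_ac)
        also have "\<dots> = wt (4 * s - 1) n * (conv n)\<^sup>2" by (simp only: q1)
        finally show ?thesis .
      qed
      have XG2: "X = SI (\<lambda>n. G n * wt (2 * s - 1/2) n * conv n)"
      proof -
        have "SI (\<lambda>n. G n * wt (2 * s - 1/2) n * conv n) = (\<Sum>n\<in>I. G n * wt (2 * s - 1/2) n * conv n)"
          by (rule SI_finite) (auto simp: I_def G_def)
        also have "\<dots> = X" unfolding X_def by (rule sum.cong) (auto simp: pt)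
        finally show ?thesis by simp
      qed
      have Xfin: "X < \<infinity>"
        unfolding X_def using conv_fin
        by (auto simp: I_def wt_def power2_eq_square ennreal_mult_less_top)
      define D1 where "D1 = SI (\<lambda>n. SI (\<lambda>p. if \<bar>n - p\<bar> \<le> \<bar>p\<bar> then G n * wt (2 * s - 1/2) n * u p * w (n - p) else 0))"
      define D2 where "D2 = SI (\<lambda>n. SI (\<lambda>p. if \<bar>n - p\<bar> \<le> \<bar>p\<bar> then G n * wt (2 * s - 1/2) n * w p * u (n - p) else 0))"
      have "X \<le> SI (\<lambda>n. G n * wt (2 * s - 1/2) n * H1 n + G n * wt (2 * s - 1/2) n * H2 n)"
        unfolding XG2 by (rule SI_mono) (simp add: distrib_left[symmetric] mult_left_mono conv_split)
      also have "\<dots> = D1 + D2"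
      proof -
        have a: "G n * wt (2 * s - 1/2) n * H1 n = SI (\<lambda>p. if \<bar>n - p\<bar> \<le> \<bar>p\<bar> then G n * wt (2 * s - 1/2) n * u p * w (n - p) else 0)" for n
          unfolding H1_def by (subst SI_cmult[symmetric]) (auto intro!: nn_integral_cong simp: mult.assoc)
        have b: "G n * wt (2 * s - 1/2) n * H2 n = SI (\<lambda>p. if \<bar>n - p\<bar> \<le> \<bar>p\<bar> then G n * wt (2 * s - 1/2) n * w p * u (n - p) else 0)" for n
          unfolding H2_def by (subst SI_cmult[symmetric]) (auto intro!: nn_integral_cong simp: mult.assoc)
        show ?thesis unfolding D1_def D2_def a b by (rule SI_add)
      qed
      finally have XD: "X \<le> D1 + D2" .
      have h1: "D1\<^sup>2 \<le> ennreal CR * Nu * Nw * X"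
        unfolding D1_def Nu_def Nw_def XG[symmetric] by (rule lemHalf[OF CR])
      have h2: "D2\<^sup>2 \<le> ennreal CR * Nu * Nw * X"
        using lemHalf[OF CR, of G w u] unfolding D2_def Nu_def Nw_def XG by (simp add: mult_ac)
      have "X \<le> 4 * (ennreal CR * Nu * Nw)"
        by (rule max_sq_bound[OF XD _ _ Xfin]) (use h1 h2 in \<open>simp_all add: mult_ac\<close>)
      thus "(\<Sum>n\<in>{- int N..int N}. wt (4 * s - 1) n * (SI (\<lambda>p. u p * w (n - p)))\<^sup>2) \<le> ennreal (4 * CR) * SI (\<lambda>p. wt (2 * s) p * (u p)\<^sup>2) * SI (\<lambda>p. wt (2 * s) p * (w p)\<^sup>2)"
        unfolding e4 by (simp add: X_def I_def conv_def Nu_def Nw_def mult_ac)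
    qed
  qed
qed

lemma lemT:
  fixes s :: real
  assumes s: "0 < s" "s < 1/2"
  shows "\<exists>K::real. K \<ge> 0 \<and> (\<forall>a b c :: int \<Rightarrow> ennreal.
     SI (\<lambda>p. wt (2 * s) p * (a p)\<^sup>2) < \<infinity> \<longrightarrow> SI (\<lambda>p. wt (2 * s) p * (b p)\<^sup>2) < \<infinity> \<longrightarrow> SI (\<lambda>p. wt (2 * s) p * (c p)\<^sup>2) < \<infinity> \<longrightarrow>
     SI (\<lambda>n. wt (4 * s - 1) n * (SI (\<lambda>p. a p * SI (\<lambda>q. b q * wt (-1) q * c (n - p - q))))\<^sup>2)
       \<le> ennreal K * SI (\<lambda>p. wt (2 * s) p * (a p)\<^sup>2) * SI (\<lambda>p. wt (2 * s) p * (b p)\<^sup>2) * SI (\<lambda>p. wt (2 * s) p * (c p)\<^sup>2))"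
proof -
  obtain KP where KP0: "KP \<ge> 0" and KP: "\<And>u w :: int \<Rightarrow> ennreal. SI (\<lambda>p. wt (2 * s) p * (u p)\<^sup>2) < \<infinity> \<Longrightarrow> SI (\<lambda>p. wt (2 * s) p * (w p)\<^sup>2) < \<infinity> \<Longrightarrow>
     SI (\<lambda>n. wt (4 * s - 1) n * (SI (\<lambda>p. u p * w (n - p)))\<^sup>2) \<le> ennreal KP * SI (\<lambda>p. wt (2 * s) p * (u p)\<^sup>2) * SI (\<lambda>p. wt (2 * s) p * (w p)\<^sup>2)"
    using lemP[OF s] by blast
  define KW where "KW = 4 powr s * 5"
  have KW0: "KW \<ge> 0" by (simp add: KW_def)
  show ?thesis
  proof (intro exI[of _ "KP * KW"] conjI allI impI)
    show "0 \<le> KP * KW" using KP0 KW0 by simp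
    fix a b c :: "int \<Rightarrow> ennreal"
    define Na where "Na = SI (\<lambda>p. wt (2 * s) p * (a p)\<^sup>2)"
    define Nb where "Nb = SI (\<lambda>p. wt (2 * s) p * (b p)\<^sup>2)"
    define Nc where "Nc = SI (\<lambda>p. wt (2 * s) p * (c p)\<^sup>2)"
    assume fa: "SI (\<lambda>p. wt (2 * s) p * (a p)\<^sup>2) < \<infinity>" and fb: "SI (\<lambda>p. wt (2 * s) p * (b p)\<^sup>2) < \<infinity>"
      and fc: "SI (\<lambda>p. wt (2 * s) p * (c p)\<^sup>2) < \<infinity>"
    define w where "w m = SI (\<lambda>q. b q * wt (-1) q * c (m - q))" for m
    have Nw: "SI (\<lambda>m. wt (2 * s) m * (w m)\<^sup>2) \<le> ennreal KW * Nb * Nc"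
      unfolding w_def Nb_def Nc_def KW_def using s by (intro lemW) simp
    have Nwf: "SI (\<lambda>m. wt (2 * s) m * (w m)\<^sup>2) < \<infinity>"
      using le_less_trans[OF Nw] fb fc unfolding Nb_def Nc_def by (simp add: ennreal_mult_less_top)
    have "SI (\<lambda>n. wt (4 * s - 1) n * (SI (\<lambda>p. a p * SI (\<lambda>q. b q * wt (-1) q * c (n - p - q))))\<^sup>2)
        = SI (\<lambda>n. wt (4 * s - 1) n * (SI (\<lambda>p. a p * w (n - p)))\<^sup>2)"
      by (simp add: w_def)
    also have "\<dots> \<le> ennreal KP * Na * SI (\<lambda>m. wt (2 * s) m * (w m)\<^sup>2)"
      unfolding Na_def by (rule KP[OF fa Nwf])
    also have "\<dots> \<le> ennreal KP * Na * (ennreal KW * Nb * Nc)"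
      by (rule mult_left_mono[OF Nw]) simp
    also have "\<dots> = ennreal (KP * KW) * Na * Nb * Nc"
      using KP0 KW0 by (simp add: ennreal_mult mult_ac)
    finally show "SI (\<lambda>n. wt (4 * s - 1) n * (SI (\<lambda>p. a p * SI (\<lambda>q. b q * wt (-1) q * c (n - p - q))))\<^sup>2)
       \<le> ennreal (KP * KW) * SI (\<lambda>p. wt (2 * s) p * (a p)\<^sup>2) * SI (\<lambda>p. wt (2 * s) p * (b p)\<^sup>2) * SI (\<lambda>p. wt (2 * s) p * (c p)\<^sup>2)"
      by (simp add: Na_def Nb_def Nc_def)
  qed
qed

lemma cmod_hatn: "cmod (hatn q) = (if q = 0 then 1 else real_of_int \<bar>q\<bar>)"
  by (simp add: hatn_def)

lemma cmod_hatn_ge: "real_of_int \<bar>q\<bar> \<le> cmod (hatn q)"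
  by (simp add: cmod_hatn)

lemma cmod_hatn_pos: "0 < cmod (hatn q)"
  by (simp add: cmod_hatn)

lemma jbr_hatn: "jbr q \<le> 2 * cmod (hatn q)"
proof (cases "q = 0")
  case True thus ?thesis by (simp add: cmod_hatn jbr_def)
next
  case False
  hence "1 \<le> \<bar>q\<bar>" by simp
  hence "\<bar>1::real\<bar> \<le> \<bar>real_of_int q\<bar>" by simp
  hence q1: "1 \<le> (real_of_int q)\<^sup>2" by (simp only: abs_le_square_iff) simp
  have "(jbr q)\<^sup>2 \<le> (2 * cmod (hatn q))\<^sup>2"
    using False q1 by (simp add: jbr_sq cmod_hatn power_mult_distrib)
  thus ?thesis by (rule power2_le_imp_le) (simp add: cmod_hatn)
qed

lemma inv_hatn: "1 / cmod (hatn q) \<le> 2 * jbr q powr (-1)"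
proof -
  have "1 / cmod (hatn q) \<le> 2 / jbr q"
    using jbr_hatn[of q] cmod_hatn_pos[of q] jbr_pos[of q] by (simp add: field_simps)
  thus ?thesis using jbr_pos[of q] by (simp add: powr_minus divide_inverse)
qed

lemma cm_gen:
  assumes k: "\<bar>k\<bar> \<le> \<bar>a\<bar>"
  shows "cmod (2 * \<i> * of_int n * of_int k / (hatn a * hatn b)) \<le> 4 * real_of_int \<bar>n\<bar> * jbr b powr (-1)"
proof -
  define ca where "ca = cmod (hatn a)"
  define cb where "cb = cmod (hatn b)"
  have ca: "0 < ca" "real_of_int \<bar>k\<bar> \<le> ca" unfolding ca_def using cmod_hatn_pos[of a] cmod_hatn_ge[of a] k by auto
  have cb: "0 < cb" unfolding cb_def using cmod_hatn_pos[of b] by auto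
  have "cmod (2 * \<i> * of_int n * of_int k / (hatn a * hatn b)) = 2 * real_of_int \<bar>n\<bar> * real_of_int \<bar>k\<bar> / (ca * cb)"
    by (simp add: norm_mult norm_divide ca_def cb_def)
  also have "\<dots> \<le> 2 * real_of_int \<bar>n\<bar> * ca / (ca * cb)"
    using ca cb by (intro divide_right_mono mult_left_mono) auto
  also have "\<dots> = 2 * real_of_int \<bar>n\<bar> * (1 / cb)" using ca by simp
  also have "\<dots> \<le> 2 * real_of_int \<bar>n\<bar> * (2 * jbr b powr (-1))"
    unfolding cb_def by (intro mult_left_mono inv_hatn) auto
  finally show ?thesis by simp
qed

lemma cm1:
  assumes nn: "n = n1 + n2 + n3"
  shows "cmod (m1t n n1 n2 n3) \<le> 4 * real_of_int \<bar>n\<bar> * jbr n2 powr (-1)"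
proof (cases "(n1 + n2) * (n1 + n3) \<noteq> 0 \<and> n > 0 \<and> n2 + n3 < 0 \<and> n3 \<noteq> 0")
  case True
  hence e: "m1t n n1 n2 n3 = 2 * \<i> * of_int n * of_int (n2 + n3) / (hatn n1 * hatn n2)"
    by (simp add: m1t_def m1_def)
  have "\<bar>n2 + n3\<bar> \<le> \<bar>n1\<bar>" using True nn by arith
  thus ?thesis unfolding e by (rule cm_gen)
next
  case False
  hence "m1t n n1 n2 n3 = 0" by (auto simp: m1t_def m1_def)
  thus ?thesis by simp
qed

lemma cm2:
  assumes nn: "n = n1 + n2 + n3"
  shows "cmod (m2 n n1 n2 n3) \<le> 4 * real_of_int \<bar>n\<bar> * jbr n2 powr (-1)"
proof (cases "n < 0 \<and> n2 + n3 > 0 \<and> n3 \<noteq> 0")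
  case True
  hence e: "m2 n n1 n2 n3 = 2 * \<i> * of_int n * of_int (n2 + n3) / (hatn n1 * hatn n2)"
    by (simp add: m2_def)
  have "\<bar>n2 + n3\<bar> \<le> \<bar>n1\<bar>" using True nn by arith
  thus ?thesis unfolding e by (rule cm_gen)
next
  case False
  hence "m2 n n1 n2 n3 = 0" by (auto simp: m2_def)
  thus ?thesis by simp
qed

lemma cm3: "cmod (m3 n n1 n2 n3) \<le> 4 * real_of_int \<bar>n\<bar> * jbr n1 powr (-1)"
proof -
  have "cmod (2 * \<i> * of_int n / hatn n1) = 2 * real_of_int \<bar>n\<bar> * (1 / cmod (hatn n1))"
    by (simp add: norm_mult norm_divide)
  also have "\<dots> \<le> 2 * real_of_int \<bar>n\<bar> * (2 * jbr n1 powr (-1))"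
    by (intro mult_left_mono inv_hatn) auto
  finally show ?thesis unfolding m3_def by auto
qed

lemma term_bound:
  fixes om :: "int \<Rightarrow> complex" and t :: real
  assumes nn: "n = n1 + n2 + n3"
  shows "cmod (exp (\<i> * of_real t * of_int (Phi n n1 n2 n3)) *
      (m1t n n1 n2 n3 * om n1 * om n2 * star om n3
       + m2 n n1 n2 n3 * om n1 * star om n2 * om n3
       + m3 n n1 n2 n3 * star om n1 * om n2 * om n3))
   \<le> 4 * real_of_int \<bar>n\<bar> * (cmod (om n1) * (cmod (om n2) * jbr n2 powr (-1) * cmod (star om n3))
      + cmod (om n1) * (cmod (star om n2) * jbr n2 powr (-1) * cmod (om n3))
      + cmod (star om n1) * jbr n1 powr (-1) * (cmod (om n2) * cmod (om n3)))"
proof -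
  have e: "cmod (exp (\<i> * of_real t * of_int (Phi n n1 n2 n3))) = 1"
  proof -
    have "\<i> * of_real t * of_int (Phi n n1 n2 n3) = \<i> * of_real (t * of_int (Phi n n1 n2 n3))" by simp
    thus ?thesis by (simp only: norm_exp_i_times)
  qed
  define A1 where "A1 = cmod (om n1)"
  define A2 where "A2 = cmod (om n2)"
  define A3 where "A3 = cmod (om n3)"
  define B1 where "B1 = cmod (star om n1)"
  define B2 where "B2 = cmod (star om n2)"
  define B3 where "B3 = cmod (star om n3)"
  have pos: "0 \<le> A1" "0 \<le> A2" "0 \<le> A3" "0 \<le> B1" "0 \<le> B2" "0 \<le> B3"
    by (simp_all add: A1_def A2_def A3_def B1_def B2_def B3_def)
  have t1: "cmod (m1t n n1 n2 n3 * om n1 * om n2 * star om n3) \<le> 4 * real_of_int \<bar>n\<bar> * (A1 * (A2 * jbr n2 powr (-1) * B3))"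
  proof -
    have "cmod (m1t n n1 n2 n3 * om n1 * om n2 * star om n3) = cmod (m1t n n1 n2 n3) * (A1 * A2 * B3)"
      by (simp add: norm_mult A1_def A2_def B3_def mult_ac)
    also have "\<dots> \<le> (4 * real_of_int \<bar>n\<bar> * jbr n2 powr (-1)) * (A1 * A2 * B3)"
      by (intro mult_right_mono cm1[OF nn]) (use pos in simp)
    finally show ?thesis by (simp add: mult_ac)
  qed
  have t2: "cmod (m2 n n1 n2 n3 * om n1 * star om n2 * om n3) \<le> 4 * real_of_int \<bar>n\<bar> * (A1 * (B2 * jbr n2 powr (-1) * A3))"
  proof -
    have "cmod (m2 n n1 n2 n3 * om n1 * star om n2 * om n3) = cmod (m2 n n1 n2 n3) * (A1 * B2 * A3)"
      by (simp add: norm_mult A1_def B2_def A3_def mult_ac)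
    also have "\<dots> \<le> (4 * real_of_int \<bar>n\<bar> * jbr n2 powr (-1)) * (A1 * B2 * A3)"
      by (intro mult_right_mono cm2[OF nn]) (use pos in simp)
    finally show ?thesis by (simp add: mult_ac)
  qed
  have t3: "cmod (m3 n n1 n2 n3 * star om n1 * om n2 * om n3) \<le> 4 * real_of_int \<bar>n\<bar> * (B1 * jbr n1 powr (-1) * (A2 * A3))"
  proof -
    have "cmod (m3 n n1 n2 n3 * star om n1 * om n2 * om n3) = cmod (m3 n n1 n2 n3) * (B1 * A2 * A3)"
      by (simp add: norm_mult B1_def A2_def A3_def mult_ac)
    also have "\<dots> \<le> (4 * real_of_int \<bar>n\<bar> * jbr n1 powr (-1)) * (B1 * A2 * A3)"
      by (intro mult_right_mono cm3) (use pos in simp)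
    finally show ?thesis by (simp add: mult_ac)
  qed
  have "cmod (exp (\<i> * of_real t * of_int (Phi n n1 n2 n3)) *
      (m1t n n1 n2 n3 * om n1 * om n2 * star om n3
       + m2 n n1 n2 n3 * om n1 * star om n2 * om n3
       + m3 n n1 n2 n3 * star om n1 * om n2 * om n3))
     = cmod (m1t n n1 n2 n3 * om n1 * om n2 * star om n3
       + m2 n n1 n2 n3 * om n1 * star om n2 * om n3
       + m3 n n1 n2 n3 * star om n1 * om n2 * om n3)"
    by (simp only: norm_mult e mult_1)
  also have "\<dots> \<le> cmod (m1t n n1 n2 n3 * om n1 * om n2 * star om n3)
       + cmod (m2 n n1 n2 n3 * om n1 * star om n2 * om n3)
       + cmod (m3 n n1 n2 n3 * star om n1 * om n2 * om n3)"
    by (meson add_mono norm_triangle_ineq order_trans order_refl)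
  also have "\<dots> \<le> 4 * real_of_int \<bar>n\<bar> * (A1 * (A2 * jbr n2 powr (-1) * B3))
       + 4 * real_of_int \<bar>n\<bar> * (A1 * (B2 * jbr n2 powr (-1) * A3))
       + 4 * real_of_int \<bar>n\<bar> * (B1 * jbr n1 powr (-1) * (A2 * A3))"
    using t1 t2 t3 by linarith
  finally show ?thesis by (simp add: A1_def A2_def A3_def B1_def B2_def B3_def distrib_left)
qed

lemma ennreal_conv_aux:
  fixes c a1 a2 a3 b1 b2 b3 j1 j2 :: real
  assumes "0 \<le> c" "0 \<le> a1" "0 \<le> a2" "0 \<le> a3" "0 \<le> b1" "0 \<le> b2" "0 \<le> b3" "0 \<le> j1" "0 \<le> j2"
  shows "ennreal (c * (a1 * (a2 * j2 * b3) + a1 * (b2 * j2 * a3) + b1 * j1 * (a2 * a3)))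
     = ennreal c * (ennreal a1 * (ennreal a2 * ennreal j2 * ennreal b3) + ennreal a1 * (ennreal b2 * ennreal j2 * ennreal a3)
        + ennreal b1 * ennreal j1 * (ennreal a2 * ennreal a3))"
  using assms by (simp add: ennreal_mult add_nonneg_nonneg mult_nonneg_nonneg)

lemma NN_pt:
  fixes w :: "real \<Rightarrow> int \<Rightarrow> complex" and t :: real and n :: int
  defines "f \<equiv> \<lambda>k. ennreal (cmod (w t k))" and "fs \<equiv> \<lambda>k. ennreal (cmod (star (w t) k))"
  shows "ennreal (cmod (NN w t n)) \<le> ennreal (4 * real_of_int \<bar>n\<bar>) *
     (SI (\<lambda>p. f p * SI (\<lambda>q. f q * wt (-1) q * fs (n - p - q)))
    + SI (\<lambda>p. f p * SI (\<lambda>q. fs q * wt (-1) q * f (n - p - q)))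
    + SI (\<lambda>p. f p * SI (\<lambda>q. fs q * wt (-1) q * f (n - p - q))))"
proof -
  define Sn where "Sn = {(n1, n2, n3). n1 + n2 + n3 = (n::int)}"
  define G where "G = (\<lambda>(n1, n2, n3). exp (\<i> * of_real t * of_int (Phi n n1 n2 n3)) *
      (m1t n n1 n2 n3 * w t n1 * w t n2 * star (w t) n3
       + m2 n n1 n2 n3 * w t n1 * star (w t) n2 * w t n3
       + m3 n n1 n2 n3 * star (w t) n1 * w t n2 * w t n3))"
  have NNe: "NN w t n = infsum G Sn" unfolding NN_def G_def Sn_def ..
  define I where "I = (\<integral>\<^sup>+z. ennreal (cmod (G z)) \<partial>count_space Sn)"
  have a: "ennreal (cmod (NN w t n)) \<le> I"
  proof (cases "I < \<infinity>")
    case True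
    have "cmod (NN w t n) \<le> enn2real I" unfolding NNe I_def
      by (rule bridge_complex) (use True in \<open>simp add: I_def\<close>)
    hence "ennreal (cmod (NN w t n)) \<le> ennreal (enn2real I)" by (rule ennreal_leI)
    also have "ennreal (enn2real I) = I" using True by simp
    finally show ?thesis .
  next
    case False
    hence "I = \<infinity>" by (simp add: less_top[symmetric])
    thus ?thesis by simp
  qed
  define h where "h = (\<lambda>(a::int, b::int). (a, b, n - a - b))"
  have bij: "bij_betw h UNIV Sn"
    unfolding h_def Sn_def by (rule bij_betwI[of _ _ _ "\<lambda>(a, b, c). (a, b)"]) auto
  have b: "I = SI (\<lambda>n1. SI (\<lambda>n2. ennreal (cmod (G (n1, n2, n - n1 - n2)))))"
  proof -
    have "I = (\<integral>\<^sup>+z. ennreal (cmod (G (h z))) \<partial>count_space UNIV)"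
      unfolding I_def by (rule nn_integral_bij_count_space[OF bij, symmetric])
    also have "\<dots> = SI (\<lambda>n1. SI (\<lambda>n2. ennreal (cmod (G (h (n1, n2))))))"
      by (rule SI_pair[symmetric])
    finally show ?thesis by (simp add: h_def)
  qed
  define T1 where "T1 n1 n2 = f n1 * (f n2 * wt (-1) n2 * fs (n - n1 - n2))" for n1 n2
  define T2 where "T2 n1 n2 = f n1 * (fs n2 * wt (-1) n2 * f (n - n1 - n2))" for n1 n2
  define T3 where "T3 n1 n2 = fs n1 * wt (-1) n1 * (f n2 * f (n - n1 - n2))" for n1 n2
  have c: "ennreal (cmod (G (n1, n2, n - n1 - n2))) \<le> ennreal (4 * real_of_int \<bar>n\<bar>) * (T1 n1 n2 + T2 n1 n2 + T3 n1 n2)" for n1 n2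
  proof -
    have "cmod (G (n1, n2, n - n1 - n2)) \<le> 4 * real_of_int \<bar>n\<bar> * (cmod (w t n1) * (cmod (w t n2) * jbr n2 powr (-1) * cmod (star (w t) (n - n1 - n2)))
      + cmod (w t n1) * (cmod (star (w t) n2) * jbr n2 powr (-1) * cmod (w t (n - n1 - n2)))
      + cmod (star (w t) n1) * jbr n1 powr (-1) * (cmod (w t n2) * cmod (w t (n - n1 - n2))))"
      unfolding G_def by (simp only: prod.case) (rule term_bound, simp)
    hence "ennreal (cmod (G (n1, n2, n - n1 - n2))) \<le> ennreal (4 * real_of_int \<bar>n\<bar> * (cmod (w t n1) * (cmod (w t n2) * jbr n2 powr (-1) * cmod (star (w t) (n - n1 - n2)))
      + cmod (w t n1) * (cmod (star (w t) n2) * jbr n2 powr (-1) * cmod (w t (n - n1 - n2)))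
      + cmod (star (w t) n1) * jbr n1 powr (-1) * (cmod (w t n2) * cmod (w t (n - n1 - n2)))))"
      by (rule ennreal_leI)
    also have "\<dots> = ennreal (4 * real_of_int \<bar>n\<bar>) * (T1 n1 n2 + T2 n1 n2 + T3 n1 n2)"
      unfolding T1_def T2_def T3_def f_def fs_def wt_def
      by (rule ennreal_conv_aux) simp_all
    finally show ?thesis .
  qed
  have d: "SI (\<lambda>n1. SI (\<lambda>n2. ennreal (4 * real_of_int \<bar>n\<bar>) * (T1 n1 n2 + T2 n1 n2 + T3 n1 n2)))
     = ennreal (4 * real_of_int \<bar>n\<bar>) * (SI (\<lambda>n1. SI (\<lambda>n2. T1 n1 n2)) + SI (\<lambda>n1. SI (\<lambda>n2. T2 n1 n2)) + SI (\<lambda>n1. SI (\<lambda>n2. T3 n1 n2)))"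
    by (simp add: SI_cmult SI_add)
  have d1: "SI (\<lambda>n1. SI (\<lambda>n2. T1 n1 n2)) = SI (\<lambda>p. f p * SI (\<lambda>q. f q * wt (-1) q * fs (n - p - q)))"
    unfolding T1_def by (simp add: SI_cmult)
  have d2: "SI (\<lambda>n1. SI (\<lambda>n2. T2 n1 n2)) = SI (\<lambda>p. f p * SI (\<lambda>q. fs q * wt (-1) q * f (n - p - q)))"
    unfolding T2_def by (simp add: SI_cmult)
  have d3: "SI (\<lambda>n1. SI (\<lambda>n2. T3 n1 n2)) = SI (\<lambda>p. f p * SI (\<lambda>q. fs q * wt (-1) q * f (n - p - q)))"
  proof -
    have "SI (\<lambda>n1. SI (\<lambda>n2. T3 n1 n2)) = SI (\<lambda>n2. SI (\<lambda>n1. T3 n1 n2))" by (rule SI_swap)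
    also have "\<dots> = SI (\<lambda>p. SI (\<lambda>q. f p * (fs q * wt (-1) q * f (n - p - q))))"
    proof -
      have "T3 q p = f p * (fs q * wt (-1) q * f (n - p - q))" for p q
      proof -
        have e: "n - q - p = n - p - q" by simp
        show ?thesis unfolding T3_def e by (simp add: mult_ac)
      qed
      thus ?thesis by simp
    qed
    also have "\<dots> = SI (\<lambda>p. f p * SI (\<lambda>q. fs q * wt (-1) q * f (n - p - q)))"
      by (simp add: SI_cmult)
    finally show ?thesis .
  qed
  have "ennreal (cmod (NN w t n)) \<le> SI (\<lambda>n1. SI (\<lambda>n2. ennreal (4 * real_of_int \<bar>n\<bar>) * (T1 n1 n2 + T2 n1 n2 + T3 n1 n2)))"
    using a unfolding b by (rule order_trans) (intro SI_mono c)
  thus ?thesis unfolding d d1 d2 d3 .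
qed

lemma sq3:
  fixes a b c :: ennreal
  shows "(a + b + c)\<^sup>2 \<le> 9 * (a\<^sup>2 + b\<^sup>2 + c\<^sup>2)"
proof -
  define M where "M = max a (max b c)"
  have "a + b + c \<le> M + M + M" unfolding M_def by (intro add_mono) (simp_all add: le_max_iff_disj)
  hence "(a + b + c)\<^sup>2 \<le> (M + M + M)\<^sup>2" by (rule power_mono) simp
  also have "(M + M + M)\<^sup>2 = 9 * M\<^sup>2"
  proof -
    have t: "(3::ennreal) = 1 + 1 + 1" by simp
    have "3 * M = M + M + M"
      by (simp only: t distrib_right mult_1)
    hence "M + M + M = 3 * M" by simp
    thus ?thesis by (simp add: power2_eq_square mult_ac)
  qed
  also have "M\<^sup>2 \<le> a\<^sup>2 + b\<^sup>2 + c\<^sup>2"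
    unfolding M_def by (auto simp: max_def add_increasing add_increasing2)
  hence "9 * M\<^sup>2 \<le> 9 * (a\<^sup>2 + b\<^sup>2 + c\<^sup>2)" by (rule mult_left_mono) simp
  finally show ?thesis .
qed

lemma weight_bound:
  fixes s :: real and n :: int
  shows "wt (2 * (2 * s - 3 / 2)) n * ennreal (4 * real_of_int \<bar>n\<bar>) ^ 2 \<le> 16 * wt (4 * s - 1) n"
proof -
  have "jbr n powr (2 * (2 * s - 3 / 2)) * (4 * real_of_int \<bar>n\<bar>)\<^sup>2 \<le> jbr n powr (2 * (2 * s - 3 / 2)) * (16 * (jbr n)\<^sup>2)"
  proof (rule mult_left_mono)
    have "real_of_int \<bar>n\<bar> \<le> jbr n" by (rule jbr_ge_abs)
    hence "(real_of_int \<bar>n\<bar>)\<^sup>2 \<le> (jbr n)\<^sup>2" by (rule power_mono) simp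
    thus "(4 * real_of_int \<bar>n\<bar>)\<^sup>2 \<le> 16 * (jbr n)\<^sup>2" by (simp add: power_mult_distrib)
  qed simp
  also have "\<dots> = 16 * jbr n powr (4 * s - 1)"
  proof -
    have "jbr n powr (2 * (2 * s - 3 / 2)) * (jbr n)\<^sup>2 = jbr n powr (2 * (2 * s - 3 / 2)) * jbr n powr 2"
      using jbr_pos[of n] by (simp add: powr_realpow)
    also have "\<dots> = jbr n powr (4 * s - 1)" by (simp add: powr_add[symmetric] algebra_simps)
    finally show ?thesis by simp
  qed
  finally have r: "jbr n powr (2 * (2 * s - 3 / 2)) * (4 * real_of_int \<bar>n\<bar>)\<^sup>2 \<le> 16 * jbr n powr (4 * s - 1)" .
  have "wt (2 * (2 * s - 3 / 2)) n * ennreal (4 * real_of_int \<bar>n\<bar>) ^ 2 = ennreal (jbr n powr (2 * (2 * s - 3 / 2)) * (4 * real_of_int \<bar>n\<bar>)\<^sup>2)"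
    unfolding wt_def by (simp add: ennreal_power ennreal_mult)
  also have "\<dots> \<le> ennreal (16 * jbr n powr (4 * s - 1))" by (rule ennreal_leI[OF r])
  also have "\<dots> = 16 * wt (4 * s - 1) n" unfolding wt_def by (simp add: ennreal_mult)
  finally show ?thesis .
qed

lemma static_bound:
  fixes s :: real
  assumes s: "0 < s" "s < 1/2"
  shows "\<exists>C::real. \<forall>(w :: real \<Rightarrow> int \<Rightarrow> complex) t. in_l2s s (w t) \<longrightarrow>
     in_l2s (2 * s - 3 / 2) (NN w t) \<and> l2s_norm (2 * s - 3 / 2) (NN w t) \<le> C * (l2s_norm s (w t))^3"
proof -
  obtain K where K0: "K \<ge> 0" and K: "\<And>a b c :: int \<Rightarrow> ennreal.
     SI (\<lambda>p. wt (2 * s) p * (a p)\<^sup>2) < \<infinity> \<Longrightarrow> SI (\<lambda>p. wt (2 * s) p * (b p)\<^sup>2) < \<infinity> \<Longrightarrow> SI (\<lambda>p. wt (2 * s) p * (c p)\<^sup>2) < \<infinity> \<Longrightarrow>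
     SI (\<lambda>n. wt (4 * s - 1) n * (SI (\<lambda>p. a p * SI (\<lambda>q. b q * wt (-1) q * c (n - p - q))))\<^sup>2)
       \<le> ennreal K * SI (\<lambda>p. wt (2 * s) p * (a p)\<^sup>2) * SI (\<lambda>p. wt (2 * s) p * (b p)\<^sup>2) * SI (\<lambda>p. wt (2 * s) p * (c p)\<^sup>2)"
    using lemT[OF s] by blast
  show ?thesis
  proof (intro exI[of _ "sqrt (432 * K)"] allI impI)
    fix w :: "real \<Rightarrow> int \<Rightarrow> complex" and t :: real
    assume hw: "in_l2s s (w t)"
    define f where "f k = ennreal (cmod (w t k))" for k
    define fs where "fs k = ennreal (cmod (star (w t) k))" for k
    define g where "g k = (jbr k powr s * cmod (w t k))\<^sup>2" for k
    have g0: "g k \<ge> 0" for k by (simp add: g_def)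
    have gs: "g summable_on UNIV" using hw unfolding in_l2s_def g_def .
    define a where "a = infsum g UNIV"
    have a0: "a \<ge> 0" unfolding a_def using g0 by (intro infsum_nonneg) auto
    define A where "A = SI (\<lambda>p. wt (2 * s) p * (f p)\<^sup>2)"
    have Aa: "A = ennreal a"
    proof -
      have "A = SI (\<lambda>k. ennreal (g k))"
        unfolding A_def
      proof (rule nn_integral_cong)
        fix k
        have "(jbr k powr s)\<^sup>2 = jbr k powr (2 * s)"
          using jbr_pos[of k] by (simp add: powr_realpow[symmetric] powr_powr mult.commute less_imp_le)
        thus "wt (2 * s) k * (f k)\<^sup>2 = ennreal (g k)"
          by (simp add: g_def wt_def f_def ennreal_power power_mult_distrib ennreal_mult)
      qed
      also have "\<dots> = ennreal a" unfolding a_def by (rule bridge_real2[OF g0 gs])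
      finally show ?thesis .
    qed
    have Afin: "A < \<infinity>" by (simp add: Aa)
    have Afs: "SI (\<lambda>p. wt (2 * s) p * (fs p)\<^sup>2) = A"
    proof -
      have "SI (\<lambda>p. wt (2 * s) p * (fs p)\<^sup>2) = SI (\<lambda>p. (\<lambda>k. wt (2 * s) k * (f k)\<^sup>2) (- p))"
        by (simp add: fs_def f_def star_def wt_def)
      also have "\<dots> = A" unfolding A_def by (rule SI_neg)
      finally show ?thesis .
    qed
    define P1 where "P1 n = SI (\<lambda>p. f p * SI (\<lambda>q. f q * wt (-1) q * fs (n - p - q)))" for n
    define P2 where "P2 n = SI (\<lambda>p. f p * SI (\<lambda>q. fs q * wt (-1) q * f (n - p - q)))" for n
    have B1: "SI (\<lambda>n. wt (4 * s - 1) n * (P1 n)\<^sup>2) \<le> ennreal K * A * A * A"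
      using K[of f f fs] Afin unfolding P1_def A_def Afs[unfolded A_def] by simp
    have B2: "SI (\<lambda>n. wt (4 * s - 1) n * (P2 n)\<^sup>2) \<le> ennreal K * A * A * A"
      using K[of f fs f] Afin unfolding P2_def A_def Afs[unfolded A_def] by simp
    define L where "L = SI (\<lambda>n. ennreal ((jbr n powr (2 * s - 3 / 2) * cmod (NN w t n))\<^sup>2))"
    have pt: "ennreal ((jbr n powr (2 * s - 3 / 2) * cmod (NN w t n))\<^sup>2) \<le>
        144 * (wt (4 * s - 1) n * (P1 n)\<^sup>2 + wt (4 * s - 1) n * (P2 n)\<^sup>2 + wt (4 * s - 1) n * (P2 n)\<^sup>2)" for n
    proof -
      have e: "ennreal ((jbr n powr (2 * s - 3 / 2) * cmod (NN w t n))\<^sup>2) = wt (2 * (2 * s - 3 / 2)) n * (ennreal (cmod (NN w t n)))\<^sup>2"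
      proof -
        have "(jbr n powr (2 * s - 3 / 2))\<^sup>2 = jbr n powr (2 * (2 * s - 3 / 2))"
          using jbr_pos[of n] by (simp add: powr_realpow[symmetric] powr_powr mult.commute less_imp_le)
        thus ?thesis by (simp add: wt_def ennreal_power power_mult_distrib ennreal_mult)
      qed
      have nb: "ennreal (cmod (NN w t n)) \<le> ennreal (4 * real_of_int \<bar>n\<bar>) * (P1 n + P2 n + P2 n)"
        using NN_pt[of w t n] unfolding P1_def P2_def f_def fs_def .
      have "wt (2 * (2 * s - 3 / 2)) n * (ennreal (cmod (NN w t n)))\<^sup>2
          \<le> wt (2 * (2 * s - 3 / 2)) n * (ennreal (4 * real_of_int \<bar>n\<bar>) * (P1 n + P2 n + P2 n))\<^sup>2"
        by (intro mult_left_mono power_mono nb) simp_all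
      also have "\<dots> = (wt (2 * (2 * s - 3 / 2)) n * ennreal (4 * real_of_int \<bar>n\<bar>) ^ 2) * (P1 n + P2 n + P2 n)\<^sup>2"
        by (simp add: power_mult_distrib mult_ac)
      also have "\<dots> \<le> (16 * wt (4 * s - 1) n) * (9 * ((P1 n)\<^sup>2 + (P2 n)\<^sup>2 + (P2 n)\<^sup>2))"
        by (intro mult_mono weight_bound sq3) simp_all
      also have "\<dots> = 144 * (wt (4 * s - 1) n * (P1 n)\<^sup>2 + wt (4 * s - 1) n * (P2 n)\<^sup>2 + wt (4 * s - 1) n * (P2 n)\<^sup>2)"
        by (simp add: algebra_simps)
      finally show ?thesis unfolding e .
    qed
    have Lb: "L \<le> ennreal (432 * K * a ^ 3)"
    proof -
      have "L \<le> SI (\<lambda>n. 144 * (wt (4 * s - 1) n * (P1 n)\<^sup>2 + wt (4 * s - 1) n * (P2 n)\<^sup>2 + wt (4 * s - 1) n * (P2 n)\<^sup>2))"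
        unfolding L_def by (rule SI_mono) (rule pt)
      also have "\<dots> = 144 * (SI (\<lambda>n. wt (4 * s - 1) n * (P1 n)\<^sup>2) + SI (\<lambda>n. wt (4 * s - 1) n * (P2 n)\<^sup>2) + SI (\<lambda>n. wt (4 * s - 1) n * (P2 n)\<^sup>2))"
        by (simp add: SI_cmult SI_add)
      also have "\<dots> \<le> 144 * (ennreal K * A * A * A + ennreal K * A * A * A + ennreal K * A * A * A)"
        by (intro mult_left_mono add_mono B1 B2) simp
      also have "\<dots> = ennreal (432 * K * a ^ 3)"
      proof -
        have X: "ennreal K * A * A * A = ennreal (K * a ^ 3)"
          using K0 a0 by (simp add: Aa ennreal_mult power3_eq_cube mult.assoc)
        have Y: "(144::ennreal) * (E + E + E) = (144 + 144 + 144) * E" for E :: ennreal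
          by (simp only: distrib_left distrib_right)
        have Z: "(144 + 144 + 144 :: ennreal) = 432" by simp
        show ?thesis unfolding X Y Z using K0 a0 by (simp add: ennreal_mult mult.assoc)
      qed
      finally show ?thesis .
    qed
    define h where "h n = (jbr n powr (2 * s - 3 / 2) * cmod (NN w t n))\<^sup>2" for n
    have h0: "h n \<ge> 0" for n by (simp add: h_def)
    have Lfin: "SI (\<lambda>n. ennreal (h n)) < \<infinity>"
      using Lb unfolding L_def h_def by (rule le_less_trans) simp
    have hs: "h summable_on UNIV" by (rule bridge_real(1)[OF h0 Lfin])
    have hv: "infsum h UNIV = enn2real L" unfolding L_def h_def using bridge_real(2)[OF h0 Lfin] by (simp add: h_def)
    have hle: "infsum h UNIV \<le> 432 * K * a ^ 3"
    proof -
      have "enn2real L \<le> enn2real (ennreal (432 * K * a ^ 3))" by (rule enn2real_mono[OF Lb]) simp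
      thus ?thesis using hv K0 a0 by simp
    qed
    have hdef: "h = (\<lambda>n. (jbr n powr (2 * s - 3 / 2) * cmod (NN w t n))\<^sup>2)" by (simp add: h_def fun_eq_iff)
    have c1: "in_l2s (2 * s - 3 / 2) (NN w t)" unfolding in_l2s_def using hs unfolding hdef .
    have na: "l2s_norm s (w t) = sqrt a" unfolding l2s_norm_def a_def g_def ..
    have "l2s_norm (2 * s - 3 / 2) (NN w t) = sqrt (infsum h UNIV)" unfolding l2s_norm_def h_def ..
    also have "\<dots> \<le> sqrt (432 * K * a ^ 3)" using hle by simp
    also have "\<dots> = sqrt (432 * K) * (sqrt a) ^ 3" by (simp add: real_sqrt_mult real_sqrt_power)
    finally have c2: "l2s_norm (2 * s - 3 / 2) (NN w t) \<le> sqrt (432 * K) * (l2s_norm s (w t))^3" unfolding na .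
    show "in_l2s (2 * s - 3 / 2) (NN w t) \<and> l2s_norm (2 * s - 3 / 2) (NN w t) \<le> sqrt (432 * K) * (l2s_norm s (w t))^3"
      using c1 c2 by blast
  qed
qed

theorem mainTheorem5:
  fixes s :: real
  assumes "0 < s" and "s < 1/2"
  shows "\<exists>C::real. \<forall>T::real. \<forall>w :: real \<Rightarrow> int \<Rightarrow> complex.
           T > 0 \<longrightarrow>
           (\<forall>t\<in>{0..T}. in_l2s s (w t)) \<longrightarrow>
           (\<forall>t0\<in>{0..T}. ((\<lambda>t. l2s_norm s (\<lambda>n. w t n - w t0 n)) \<longlongrightarrow> 0) (at t0 within {0..T})) \<longrightarrow>
           (\<forall>t\<in>{0..T}. in_l2s (2 * s - 3 / 2) (NN w t) \<and>
                         l2s_norm (2 * s - 3 / 2) (NN w t) \<le> C * (l2s_norm s (w t))^3)"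
proof -
  obtain C where C: "\<And>(w :: real \<Rightarrow> int \<Rightarrow> complex) t. in_l2s s (w t) \<Longrightarrow>
     in_l2s (2 * s - 3 / 2) (NN w t) \<and> l2s_norm (2 * s - 3 / 2) (NN w t) \<le> C * (l2s_norm s (w t))^3"
    using static_bound[OF assms] by blast
  show ?thesis by (intro exI[of _ C]) (auto intro!: C)
qed

end
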